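(* The class of $\mathbb{R}$-forests (with isometric embeddings) has the joint embedding property and the amalgamation property.
   Context: An $\mathbb{R}$-forest is a complete extended ($[0,\infty]$-valued) metric space $(X,d)$ such that for every $x\in X$, $\{y:d(x,y)<\infty\}$ is an $\mathbb{R}$-tree (a uniquely arc-connected complete metric space whose arcs $[x,y]$ are isometric to $[0,d(x,y)]$). *)

theory Defs
  imports Complex_Main "HOL-Library.Extended_Nonnegative_Real"
begin

definition ext_metric :: "'a set \<Rightarrow> ('a \<Rightarrow> 'a \<Rightarrow> ennreal) \<Rightarrow> bool" where
  "ext_metric X d \<longleftrightarrow>
     (\<forall>x\<in>X. \<forall>y\<in>X. d x y = 0 \<longleftrightarrow> x = y) \<and>
     (\<forall>x\<in>X. \<forall>y\<in>X. d x y = d y x) \<and>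
     (\<forall>x\<in>X. \<forall>y\<in>X. \<forall>z\<in>X. d x z \<le> d x y + d y z)"

definition ext_cauchy :: "('a \<Rightarrow> 'a \<Rightarrow> ennreal) \<Rightarrow> (nat \<Rightarrow> 'a) \<Rightarrow> bool" where
  "ext_cauchy d s \<longleftrightarrow>
     (\<forall>e::real. e > 0 \<longrightarrow> (\<exists>N. \<forall>m\<ge>N. \<forall>n\<ge>N. d (s m) (s n) < ennreal e))"

definition ext_converges_in :: "'a set \<Rightarrow> ('a \<Rightarrow> 'a \<Rightarrow> ennreal) \<Rightarrow> (nat \<Rightarrow> 'a) \<Rightarrow> bool" where
  "ext_converges_in X d s \<longleftrightarrow>
     (\<exists>x\<in>X. \<forall>e::real. e > 0 \<longrightarrow> (\<exists>N. \<forall>n\<ge>N. d (s n) x < ennreal e))"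

definition ext_complete :: "'a set \<Rightarrow> ('a \<Rightarrow> 'a \<Rightarrow> ennreal) \<Rightarrow> bool" where
  "ext_complete X d \<longleftrightarrow>
     (\<forall>s. (\<forall>n. s n \<in> X) \<and> ext_cauchy d s \<longrightarrow> ext_converges_in X d s)"

text \<open>Since [0,1] is compact,
  such a map is automatically a homeomorphism onto its image.\<close>

definition is_arc :: "'a set \<Rightarrow> ('a \<Rightarrow> 'a \<Rightarrow> ennreal) \<Rightarrow> 'a \<Rightarrow> 'a \<Rightarrow> 'a set \<Rightarrow> bool" where
  "is_arc T d y z A \<longleftrightarrow>
     (\<exists>\<gamma>::real \<Rightarrow> 'a.
        \<gamma> ` {0..1} = A \<and> A \<subseteq> T \<and> inj_on \<gamma> {0..1} \<and> \<gamma> 0 = y \<and> \<gamma> 1 = z \<and>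
        (\<forall>t\<in>{0..1}. \<forall>e::real. e > 0 \<longrightarrow>
           (\<exists>\<delta>>0. \<forall>s\<in>{0..1}. \<bar>s - t\<bar> < \<delta> \<longrightarrow> d (\<gamma> s) (\<gamma> t) < ennreal e)))"

definition isometric_to_interval :: "('a \<Rightarrow> 'a \<Rightarrow> ennreal) \<Rightarrow> 'a set \<Rightarrow> real \<Rightarrow> bool" where
  "isometric_to_interval d A L \<longleftrightarrow>
     (\<exists>\<phi>::real \<Rightarrow> 'a. bij_betw \<phi> {0..L} A \<and>
        (\<forall>s\<in>{0..L}. \<forall>t\<in>{0..L}. d (\<phi> s) (\<phi> t) = ennreal \<bar>s - t\<bar>))"

definition R_tree :: "'a set \<Rightarrow> ('a \<Rightarrow> 'a \<Rightarrow> ennreal) \<Rightarrow> bool" where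
  "R_tree T d \<longleftrightarrow>
     ext_metric T d \<and> (\<forall>y\<in>T. \<forall>z\<in>T. d y z < \<infinity>) \<and> ext_complete T d \<and>
     (\<forall>y\<in>T. \<forall>z\<in>T. y \<noteq> z \<longrightarrow>
        (\<exists>!A. is_arc T d y z A) \<and>
        (\<forall>A. is_arc T d y z A \<longrightarrow> isometric_to_interval d A (enn2real (d y z))))"

definition R_forest :: "'a set \<Rightarrow> ('a \<Rightarrow> 'a \<Rightarrow> ennreal) \<Rightarrow> bool" where
  "R_forest X d \<longleftrightarrow>
     ext_metric X d \<and> ext_complete X d \<and>
     (\<forall>x\<in>X. R_tree {y\<in>X. d x y < \<infinity>} d)"

definition iso_emb ::
  "'a set \<Rightarrow> ('a \<Rightarrow> 'a \<Rightarrow> ennreal) \<Rightarrow> 'b set \<Rightarrow> ('b \<Rightarrow> 'b \<Rightarrow> ennreal) \<Rightarrow> ('a \<Rightarrow> 'b) \<Rightarrow> bool" where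
  "iso_emb X dX Y dY f \<longleftrightarrow> f ` X \<subseteq> Y \<and> (\<forall>x\<in>X. \<forall>y\<in>X. dY (f x) (f y) = dX x y)"

end

theory Submission
  imports Defs
begin

definition btw :: "('a \<Rightarrow> 'a \<Rightarrow> ennreal) \<Rightarrow> 'a \<Rightarrow> 'a \<Rightarrow> 'a \<Rightarrow> bool" where
  "btw d x q y \<longleftrightarrow> d x q + d q y = d x y \<and> d x y < \<infinity>"

definition geod :: "'a set \<Rightarrow> ('a \<Rightarrow> 'a \<Rightarrow> ennreal) \<Rightarrow> 'a \<Rightarrow> 'a \<Rightarrow> (real \<Rightarrow> 'a) \<Rightarrow> bool" where
  "geod X d x y \<phi> \<longleftrightarrow> d x y < \<infinity> \<and> \<phi> 0 = x \<and> \<phi> (enn2real (d x y)) = y \<and>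
     (\<forall>t\<in>{0..enn2real (d x y)}. \<phi> t \<in> X) \<and>
     (\<forall>s\<in>{0..enn2real (d x y)}. \<forall>t\<in>{0..enn2real (d x y)}. d (\<phi> s) (\<phi> t) = ennreal \<bar>s - t\<bar>)"

lemma em_zero: "ext_metric X d \<Longrightarrow> x \<in> X \<Longrightarrow> d x x = 0"
  by (simp add: ext_metric_def)
lemma em_eq: "ext_metric X d \<Longrightarrow> x \<in> X \<Longrightarrow> y \<in> X \<Longrightarrow> d x y = 0 \<longleftrightarrow> x = y"
  by (simp add: ext_metric_def)
lemma em_sym: "ext_metric X d \<Longrightarrow> x \<in> X \<Longrightarrow> y \<in> X \<Longrightarrow> d x y = d y x"
  by (simp add: ext_metric_def)
lemma em_tri: "ext_metric X d \<Longrightarrow> x \<in> X \<Longrightarrow> y \<in> X \<Longrightarrow> z \<in> X \<Longrightarrow> d x z \<le> d x y + d y z"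
  by (simp add: ext_metric_def)
lemma em_fin: "ext_metric X d \<Longrightarrow> x \<in> X \<Longrightarrow> y \<in> X \<Longrightarrow> z \<in> X \<Longrightarrow> d x y < \<infinity> \<Longrightarrow> d y z < \<infinity> \<Longrightarrow> d x z < \<infinity>"
proof -
  assume a: "ext_metric X d" "x \<in> X" "y \<in> X" "z \<in> X" "d x y < \<infinity>" "d y z < \<infinity>"
  have "d x z \<le> d x y + d y z" using em_tri[OF a(1) a(2) a(3) a(4)] .
  also have "\<dots> < \<infinity>" using a by simp
  finally show ?thesis .
qed

lemma geodD:
  assumes "geod X d x y \<phi>"
  shows "d x y < \<infinity>" "\<phi> 0 = x" "\<phi> (enn2real (d x y)) = y" "\<And>t. t \<in> {0..enn2real (d x y)} \<Longrightarrow> \<phi> t \<in> X"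
    "\<And>s t. s \<in> {0..enn2real (d x y)} \<Longrightarrow> t \<in> {0..enn2real (d x y)} \<Longrightarrow> d (\<phi> s) (\<phi> t) = ennreal \<bar>s - t\<bar>"
    "enn2real (d x y) \<ge> 0"
  using assms unfolding geod_def by (auto simp: less_top)

lemma geodD_eq: "geod X d x y \<phi> \<Longrightarrow> d x y = ennreal (enn2real (d x y))"
  unfolding geod_def by (auto simp: less_top)

lemma arc_of_lip:
  assumes "L > 0" "\<forall>t\<in>{0..L}. \<psi> t \<in> X" "\<psi> 0 = x" "\<psi> L = y" "inj_on \<psi> {0..L}"
    "\<forall>s\<in>{0..L}. \<forall>t\<in>{0..L}. d (\<psi> s) (\<psi> t) \<le> ennreal \<bar>s - t\<bar>"
  shows "is_arc X d x y (\<psi> ` {0..L})"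
  unfolding is_arc_def
proof (intro exI[of _ "\<lambda>t. \<psi> (L * t)"] conjI)
  have im: "(\<lambda>t. L * t) ` {0..1} = {0..L}"
  proof
    show "(\<lambda>t. L * t) ` {0..1} \<subseteq> {0..L}" using assms(1) by (auto simp: mult_le_cancel_left1)
    show "{0..L} \<subseteq> (\<lambda>t. L * t) ` {0..1}"
    proof
      fix u assume "u \<in> {0..L}"
      then have "u = L * (u / L)" "u / L \<in> {0..1}" using assms(1) by auto
      then show "u \<in> (\<lambda>t. L * t) ` {0..1}" by blast
    qed
  qed
  show "(\<lambda>t. \<psi> (L * t)) ` {0..1} = \<psi> ` {0..L}"
    using im by (metis image_image)
  show "\<psi> ` {0..L} \<subseteq> X" using assms(2) by auto
  show "inj_on (\<lambda>t. \<psi> (L * t)) {0..1}"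
  proof (rule inj_onI)
    fix s t assume "s \<in> {0..1}" "t \<in> {0..1}" "\<psi> (L * s) = \<psi> (L * t)"
    moreover have "L * s \<in> {0..L}" "L * t \<in> {0..L}" using assms(1) \<open>s \<in> {0..1}\<close> \<open>t \<in> {0..1}\<close> by (auto intro: mult_left_le)
    ultimately have "L * s = L * t" using assms(5) by (auto dest: inj_onD)
    then show "s = t" using assms(1) by simp
  qed
  show "\<psi> (L * 0) = x" "\<psi> (L * 1) = y" using assms by auto
  show "\<forall>t\<in>{0..1}. \<forall>e>0. \<exists>\<delta>>0. \<forall>s\<in>{0..1}. \<bar>s - t\<bar> < \<delta> \<longrightarrow> d (\<psi> (L * s)) (\<psi> (L * t)) < ennreal e"
  proof (intro ballI allI impI)
    fix t e :: real assume t: "t \<in> {0..1}" and e: "e > 0"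
    show "\<exists>\<delta>>0. \<forall>s\<in>{0..1}. \<bar>s - t\<bar> < \<delta> \<longrightarrow> d (\<psi> (L * s)) (\<psi> (L * t)) < ennreal e"
    proof (intro exI[of _ "e / L"] conjI ballI impI)
      show "e / L > 0" using e assms(1) by simp
      fix s assume s: "s \<in> {0..1}" and "\<bar>s - t\<bar> < e / L"
      then have "L * \<bar>s - t\<bar> < e" using assms(1) by (simp add: field_simps)
      then have lt: "\<bar>L * s - L * t\<bar> < e" using assms(1)
        by (metis abs_mult abs_of_pos right_diff_distrib)
      have "L * s \<in> {0..L}" "L * t \<in> {0..L}" using assms(1) s t by (auto intro: mult_left_le)
      then have "d (\<psi> (L * s)) (\<psi> (L * t)) \<le> ennreal \<bar>L * s - L * t\<bar>" using assms(6) by blast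
      also have "\<dots> < ennreal e" using lt e by (simp add: ennreal_lessI)
      finally show "d (\<psi> (L * s)) (\<psi> (L * t)) < ennreal e" .
    qed
  qed
qed

lemma ennreal_add_real: "0 \<le> a \<Longrightarrow> 0 \<le> b \<Longrightarrow> ennreal a + ennreal b = ennreal (a + b)"
  by (simp add: ennreal_plus)

lemma geod_dist:
  assumes "geod X d x y \<phi>" "t \<in> {0..enn2real (d x y)}"
  shows "d x (\<phi> t) = ennreal t" "d (\<phi> t) y = ennreal (enn2real (d x y) - t)"
proof -
  have L: "0 \<in> {0..enn2real (d x y)}" "enn2real (d x y) \<in> {0..enn2real (d x y)}" using geodD(6)[OF assms(1)] by auto
  show "d x (\<phi> t) = ennreal t" using geodD(5)[OF assms(1) L(1) assms(2)] geodD(2)[OF assms(1)] assms(2) by simp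
  show "d (\<phi> t) y = ennreal (enn2real (d x y) - t)" using geodD(5)[OF assms(1) assms(2) L(2)] geodD(3)[OF assms(1)] assms(2) by simp
qed

lemma geod_btw:
  assumes "geod X d x y \<phi>" "t \<in> {0..enn2real (d x y)}"
  shows "btw d x (\<phi> t) y"
proof -
  have "d x (\<phi> t) + d (\<phi> t) y = ennreal (enn2real (d x y))"
    using geod_dist[OF assms] assms(2) by (simp del: ennreal_plus add: ennreal_add_real)
  also have "ennreal (enn2real (d x y)) = d x y" by (rule sym[OF geodD_eq[OF assms(1)]])
  finally show ?thesis unfolding btw_def using geodD(1)[OF assms(1)] by simp
qed

lemma geod_inj:
  assumes "ext_metric X d" "geod X d x y \<phi>"
  shows "inj_on \<phi> {0..enn2real (d x y)}"
proof (rule inj_onI)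
  fix s t assume st: "s \<in> {0..enn2real (d x y)}" "t \<in> {0..enn2real (d x y)}" "\<phi> s = \<phi> t"
  then have "d (\<phi> s) (\<phi> t) = 0" using em_zero[OF assms(1) geodD(4)[OF assms(2)]] by simp
  then have "ennreal \<bar>s - t\<bar> = 0" using geodD(5)[OF assms(2) st(1,2)] by simp
  then show "s = t" by simp
qed

lemma geod_arc:
  assumes "ext_metric X d" "geod X d x y \<phi>" "x \<noteq> y"
  shows "is_arc X d x y (\<phi> ` {0..enn2real (d x y)})"
proof (rule arc_of_lip)
  have "enn2real (d x y) \<noteq> 0" using geodD(2,3)[OF assms(2)] assms(3) by auto
  then show "enn2real (d x y) > 0" using geodD(6)[OF assms(2)] by linarith
qed (use geodD[OF assms(2)] geod_inj[OF assms(1,2)] in auto)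

lemma geod_rev:
  assumes "ext_metric X d" "geod X d x y \<phi>" "x \<in> X" "y \<in> X"
  shows "geod X d y x (\<lambda>t. \<phi> (enn2real (d x y) - t))"
    "(\<lambda>t. \<phi> (enn2real (d x y) - t)) ` {0..enn2real (d y x)} = \<phi> ` {0..enn2real (d x y)}"
proof -
  have s: "d y x = d x y" using em_sym[OF assms(1,3,4)] by simp
  let ?L = "enn2real (d x y)"
  have "(\<lambda>t. ?L - t) ` {0..?L} = {0..?L}"
  proof
    show "(\<lambda>t. ?L - t) ` {0..?L} \<subseteq> {0..?L}" by auto
    show "{0..?L} \<subseteq> (\<lambda>t. ?L - t) ` {0..?L}"
    proof
      fix u assume "u \<in> {0..?L}" then have "u = ?L - (?L - u)" "?L - u \<in> {0..?L}" by auto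
      then show "u \<in> (\<lambda>t. ?L - t) ` {0..?L}" by blast
    qed
  qed
  then have "\<phi> ` ((\<lambda>t. ?L - t) ` {0..?L}) = \<phi> ` {0..?L}" by simp
  moreover have "(\<lambda>t. \<phi> (?L - t)) ` {0..?L} = \<phi> ` ((\<lambda>t. ?L - t) ` {0..?L})"
    by (simp only: image_image)
  ultimately show "(\<lambda>t. \<phi> (?L - t)) ` {0..enn2real (d y x)} = \<phi> ` {0..?L}" unfolding s
    by simp
  show "geod X d y x (\<lambda>t. \<phi> (?L - t))" unfolding geod_def s
  proof (intro conjI ballI)
    fix s t assume "s \<in> {0..?L}" "t \<in> {0..?L}"
    then show "d (\<phi> (?L - s)) (\<phi> (?L - t)) = ennreal \<bar>s - t\<bar>"
      using geodD(5)[OF assms(2), of "?L - s" "?L - t"] by (simp add: abs_minus_commute)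
  next
    show "d x y < \<infinity>" using geodD(1)[OF assms(2)] .
    show "\<phi> (?L - 0) = y" using geodD(3)[OF assms(2)] by simp
    show "\<phi> (?L - ?L) = x" using geodD(2)[OF assms(2)] by simp
    fix t assume "t \<in> {0..?L}" then have "?L - t \<in> {0..?L}" by simp
    then show "\<phi> (?L - t) \<in> X" using geodD(4)[OF assms(2)] by blast
  qed
qed

lemma geod_sub:
  assumes "geod X d x y \<phi>" "t \<in> {0..enn2real (d x y)}"
  shows "geod X d x (\<phi> t) \<phi>"
proof -
  have e: "enn2real (d x (\<phi> t)) = t" using geod_dist(1)[OF assms] assms(2) by simp
  show ?thesis unfolding geod_def e using geodD[OF assms(1)] assms(2) geod_dist(1)[OF assms] by auto
qed

lemma geod_refl:
  assumes "ext_metric X d" "x \<in> X"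
  shows "geod X d x x (\<lambda>_. x)"
  unfolding geod_def using em_zero[OF assms] assms by auto

lemma concat_arc:
  assumes em: "ext_metric X d" and g1: "geod X d x q \<phi>1" and g2: "geod X d q y \<phi>2" and xy: "x \<noteq> y"
    and int: "\<forall>t\<in>{0..enn2real (d x q)}. \<forall>u\<in>{0..enn2real (d q y)}. \<phi>1 t = \<phi>2 u \<longrightarrow> \<phi>1 t = q"
  shows "is_arc X d x y (\<phi>1 ` {0..enn2real (d x q)} \<union> \<phi>2 ` {0..enn2real (d q y)})"
proof -
  define L1 where "L1 = enn2real (d x q)"
  define L2 where "L2 = enn2real (d q y)"
  define \<psi> where "\<psi> t = (if t \<le> L1 then \<phi>1 t else \<phi>2 (t - L1))" for t
  have L1: "L1 \<ge> 0" and L2: "L2 \<ge> 0" using geodD(6)[OF g1] geodD(6)[OF g2] by (auto simp: L1_def L2_def)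
  have p1: "\<phi>1 0 = x" "\<phi>1 L1 = q" "\<And>t. t \<in> {0..L1} \<Longrightarrow> \<phi>1 t \<in> X"
    "\<And>s t. s \<in> {0..L1} \<Longrightarrow> t \<in> {0..L1} \<Longrightarrow> d (\<phi>1 s) (\<phi>1 t) = ennreal \<bar>s - t\<bar>"
    using geodD[OF g1] by (auto simp: L1_def)
  have p2: "\<phi>2 0 = q" "\<phi>2 L2 = y" "\<And>t. t \<in> {0..L2} \<Longrightarrow> \<phi>2 t \<in> X"
    "\<And>s t. s \<in> {0..L2} \<Longrightarrow> t \<in> {0..L2} \<Longrightarrow> d (\<phi>2 s) (\<phi>2 t) = ennreal \<bar>s - t\<bar>"
    using geodD[OF g2] by (auto simp: L2_def)
  have qX: "q \<in> X" using p1(3)[of L1] p1(2) L1 by simp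
  have Lpos: "L1 + L2 > 0"
  proof (rule ccontr)
    assume "\<not> L1 + L2 > 0" then have "L1 = 0" "L2 = 0" using L1 L2 by auto
    then show False using p1(1,2) p2(1,2) xy by auto
  qed
  have inX: "\<forall>t\<in>{0..L1+L2}. \<psi> t \<in> X" using p1(3) p2(3) L1 L2 by (auto simp: \<psi>_def)
  have \<psi>0: "\<psi> 0 = x" using p1(1) L1 by (simp add: \<psi>_def)
  have \<psi>L: "\<psi> (L1 + L2) = y"
  proof (cases "L2 = 0")
    case True then show ?thesis using p1(2) p2(1,2) by (simp add: \<psi>_def)
  next
    case False then show ?thesis using p2(2) L2 by (simp add: \<psi>_def)
  qed
  have cross: "d (\<phi>1 s) (\<phi>2 u) \<le> ennreal (L1 - s + u)" if "s \<in> {0..L1}" "u \<in> {0..L2}" for s u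
  proof -
    have "d (\<phi>1 s) (\<phi>2 u) \<le> d (\<phi>1 s) q + d q (\<phi>2 u)"
      using em_tri[OF em p1(3)[OF that(1)] qX p2(3)[OF that(2)]] .
    also have "d (\<phi>1 s) q = ennreal (L1 - s)" using p1(4)[OF that(1), of L1] p1(2) L1 that by auto
    also have "d q (\<phi>2 u) = ennreal u" using p2(4)[of 0 u] p2(1) L2 that by auto
    also have "ennreal (L1 - s) + ennreal u = ennreal (L1 - s + u)" by (rule ennreal_add_real) (use that in auto)
    finally show ?thesis .
  qed
  have lip: "\<forall>s\<in>{0..L1+L2}. \<forall>t\<in>{0..L1+L2}. d (\<psi> s) (\<psi> t) \<le> ennreal \<bar>s - t\<bar>"
  proof (intro ballI)
    fix s t assume s: "s \<in> {0..L1+L2}" and t: "t \<in> {0..L1+L2}"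
    consider "s \<le> L1" "t \<le> L1" | "s \<le> L1" "\<not> t \<le> L1" | "\<not> s \<le> L1" "t \<le> L1" | "\<not> s \<le> L1" "\<not> t \<le> L1" by blast
    then show "d (\<psi> s) (\<psi> t) \<le> ennreal \<bar>s - t\<bar>"
    proof cases
      case 1 then show ?thesis using p1(4) s t by (simp add: \<psi>_def)
    next
      case 2
      then have "d (\<psi> s) (\<psi> t) \<le> ennreal (L1 - s + (t - L1))" using cross[of s "t - L1"] s t by (simp add: \<psi>_def)
      then show ?thesis using 2 by simp
    next
      case 3
      have "t \<in> {0..L1}" "s - L1 \<in> {0..L2}" using 3 s t by auto
      then have "d (\<phi>2 (s - L1)) (\<phi>1 t) = d (\<phi>1 t) (\<phi>2 (s - L1))" using em_sym[OF em p2(3) p1(3)] by blast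
      then have "d (\<psi> s) (\<psi> t) = d (\<phi>1 t) (\<phi>2 (s - L1))" using 3 by (simp add: \<psi>_def)
      also have "\<dots> \<le> ennreal (L1 - t + (s - L1))" using cross[of t "s - L1"] s t 3 by simp
      finally show ?thesis using 3 by simp
    next
      case 4 then show ?thesis using p2(4)[of "s - L1" "t - L1"] s t by (simp add: \<psi>_def)
    qed
  qed
  have crossinj: False if "s \<in> {0..L1}" "u \<in> {0..L2}" "u > 0" "\<phi>1 s = \<phi>2 u" for s u
  proof -
    have "\<phi>2 u = q" using int that by (auto simp: L1_def L2_def)
    then have "d (\<phi>2 0) (\<phi>2 u) = 0" using p2(1) em_zero[OF em qX] by simp
    then have "ennreal \<bar>0 - u\<bar> = 0" using p2(4)[of 0 u] that L2 by simp
    then show False using that by simp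
  qed
  have inj: "inj_on \<psi> {0..L1+L2}"
  proof (rule inj_onI)
    fix s t assume s: "s \<in> {0..L1+L2}" and t: "t \<in> {0..L1+L2}" and e: "\<psi> s = \<psi> t"
    consider "s \<le> L1" "t \<le> L1" | "s \<le> L1" "\<not> t \<le> L1" | "\<not> s \<le> L1" "t \<le> L1" | "\<not> s \<le> L1" "\<not> t \<le> L1" by blast
    then show "s = t"
    proof cases
      case 1 then show ?thesis using e geod_inj[OF em g1] s t by (auto simp: \<psi>_def L1_def dest: inj_onD)
    next
      case 2 then show ?thesis using crossinj[of s "t - L1"] e s t by (auto simp: \<psi>_def)
    next
      case 3 then show ?thesis using crossinj[of t "s - L1"] e s t by (auto simp: \<psi>_def)
    next
      case 4 then have "s - L1 = t - L1" using e geod_inj[OF em g2] s t by (auto simp: \<psi>_def L2_def dest: inj_onD)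
      then show ?thesis by simp
    qed
  qed
  have img: "\<psi> ` {0..L1+L2} = \<phi>1 ` {0..L1} \<union> \<phi>2 ` {0..L2}"
  proof
    show "\<psi> ` {0..L1+L2} \<subseteq> \<phi>1 ` {0..L1} \<union> \<phi>2 ` {0..L2}" by (auto simp: \<psi>_def)
    show "\<phi>1 ` {0..L1} \<union> \<phi>2 ` {0..L2} \<subseteq> \<psi> ` {0..L1+L2}"
    proof
      fix z assume "z \<in> \<phi>1 ` {0..L1} \<union> \<phi>2 ` {0..L2}"
      then consider t where "t \<in> {0..L1}" "z = \<phi>1 t" | u where "u \<in> {0..L2}" "z = \<phi>2 u" by blast
      then show "z \<in> \<psi> ` {0..L1+L2}"
      proof cases
        case 1 then have "z = \<psi> t" "t \<in> {0..L1+L2}" using L2 by (auto simp: \<psi>_def)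
        then show ?thesis by blast
      next
        case 2
        show ?thesis
        proof (cases "u = 0")
          case True then have "z = \<psi> L1" "L1 \<in> {0..L1+L2}" using 2 p1(2) p2(1) L1 L2 by (auto simp: \<psi>_def)
          then show ?thesis by blast
        next
          case False then have "z = \<psi> (u + L1)" "u + L1 \<in> {0..L1+L2}" using 2 L1 by (auto simp: \<psi>_def)
          then show ?thesis by blast
        qed
      qed
    qed
  qed
  have "is_arc X d x y (\<psi> ` {0..L1+L2})"
    by (rule arc_of_lip[OF Lpos inX \<psi>0 \<psi>L inj lip])
  then show ?thesis using img by (simp add: L1_def L2_def)
qed

lemma arc_fin:
  assumes em: "ext_metric X d" and a: "is_arc X d x y A"
  shows "A \<subseteq> {z\<in>X. d x z < \<infinity>}"
proof -
  obtain \<gamma> :: "real \<Rightarrow> 'a" where g: "\<gamma> ` {0..1} = A" "A \<subseteq> X" "\<gamma> 0 = x"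
    and c: "\<forall>t\<in>{0..1}. \<forall>e::real. e > 0 \<longrightarrow> (\<exists>\<delta>>0. \<forall>s\<in>{0..1}. \<bar>s - t\<bar> < \<delta> \<longrightarrow> d (\<gamma> s) (\<gamma> t) < ennreal e)"
    using a unfolding is_arc_def by blast
  have "\<forall>t\<in>{0..1}. \<exists>\<delta>>0. \<forall>s\<in>{0..1}. \<bar>s - t\<bar> < \<delta> \<longrightarrow> d (\<gamma> s) (\<gamma> t) < ennreal 1"
  proof
    fix t :: real assume t: "t \<in> {0..1}"
    have "(1::real) > 0" by simp
    then show "\<exists>\<delta>>0. \<forall>s\<in>{0..1}. \<bar>s - t\<bar> < \<delta> \<longrightarrow> d (\<gamma> s) (\<gamma> t) < ennreal 1"
      using c t by blast
  qed
  from bchoice[OF this] obtain \<delta> where \<delta>0: "\<forall>t\<in>{0..1}. \<delta> t > 0 \<and> (\<forall>s\<in>{0..1}. \<bar>s - t\<bar> < \<delta> t \<longrightarrow> d (\<gamma> s) (\<gamma> t) < ennreal 1)"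
    by blast
  then have \<delta>: "\<And>t. t \<in> {0..1} \<Longrightarrow> \<delta> t > 0 \<and> (\<forall>s\<in>{0..1}. \<bar>s - t\<bar> < \<delta> t \<longrightarrow> d (\<gamma> s) (\<gamma> t) < ennreal 1)"
    by blast
  have gX: "\<gamma> t \<in> X" if "t \<in> {0..1}" for t using g that by blast
  define U where "U = {t\<in>{0..1}. d x (\<gamma> t) < \<infinity>}"
  define OU where "OU = (\<Union>t\<in>U. {t - \<delta> t<..<t + \<delta> t})"
  define OV where "OV = (\<Union>t\<in>{0..1}-U. {t - \<delta> t<..<t + \<delta> t})"
  have "OU \<inter> {0..1} = {} \<or> OV \<inter> {0..1} = {}"
  proof (rule connectedD[OF connected_Icc])
    show "open OU" "open OV" unfolding OU_def OV_def by auto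
    show "{0..1} \<subseteq> OU \<union> OV"
    proof
      fix t :: real assume t: "t \<in> {0..1}"
      then have "t \<in> {t - \<delta> t<..<t + \<delta> t}" using \<delta>[OF t] by auto
      then show "t \<in> OU \<union> OV" using t unfolding OU_def OV_def by blast
    qed
    show "OU \<inter> OV \<inter> {0..1} = {}"
    proof (rule ccontr)
      assume "OU \<inter> OV \<inter> {0..1} \<noteq> {}"
      then obtain s t1 t2 where s: "s \<in> {0..1}" and t1: "t1 \<in> U" "s \<in> {t1 - \<delta> t1<..<t1 + \<delta> t1}"
        and t2: "t2 \<in> {0..1}" "t2 \<notin> U" "s \<in> {t2 - \<delta> t2<..<t2 + \<delta> t2}"
        unfolding OU_def OV_def by blast
      have t1': "t1 \<in> {0..1}" using t1 by (simp add: U_def)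
      have h1: "d (\<gamma> s) (\<gamma> t1) < ennreal 1" using \<delta>[OF t1'] s t1 by (auto simp: abs_less_iff)
      have "d (\<gamma> s) (\<gamma> t1) < \<infinity>" using order.strict_trans[OF h1 ennreal_less_top] by simp
      then have a1: "d (\<gamma> t1) (\<gamma> s) < \<infinity>" using em_sym[OF em gX[OF t1'] gX[OF s]] by simp
      have h2: "d (\<gamma> s) (\<gamma> t2) < ennreal 1" using \<delta>[OF t2(1)] s t2 by (auto simp: abs_less_iff)
      have a2: "d (\<gamma> s) (\<gamma> t2) < \<infinity>" using order.strict_trans[OF h2 ennreal_less_top] by simp
      have "d (\<gamma> t1) (\<gamma> t2) < \<infinity>"
        using em_fin[OF em gX[OF t1'] gX[OF s] gX[OF t2(1)] a1 a2] .
      moreover have "d x (\<gamma> t1) < \<infinity>" using t1 by (simp add: U_def)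
      moreover have "x \<in> X" using g(3) gX[of 0] by simp
      ultimately have "d x (\<gamma> t2) < \<infinity>"
        using em_fin[OF em _ gX[OF t1'] gX[OF t2(1)]] by blast
      then show False using t2 by (simp add: U_def)
    qed
  qed
  moreover have "0 \<in> OU \<inter> {0..1}"
  proof -
    have "0 \<in> U" using em_zero[OF em, of x] g(3) gX[of 0] by (auto simp: U_def)
    moreover have "(0::real) \<in> {0 - \<delta> 0<..<0 + \<delta> 0}" using \<delta>[of 0] by auto
    ultimately show ?thesis unfolding OU_def by auto
  qed
  ultimately have "OV \<inter> {0..1} = {}" by blast
  then have "{0..1} \<subseteq> U"
  proof -
    assume e: "OV \<inter> {0..1} = {}"
    { fix t :: real assume t: "t \<in> {0..1}" "t \<notin> U"
      then have "t \<in> {0..1} - U" "t \<in> {t - \<delta> t<..<t + \<delta> t}" using \<delta>[OF t(1)] by auto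
      then have "t \<in> OV" unfolding OV_def by blast
      then have False using e t by blast }
    then show ?thesis by blast
  qed
  then show ?thesis using g(1) gX unfolding U_def by auto
qed

definition T1 :: "'a set \<Rightarrow> ('a \<Rightarrow> 'a \<Rightarrow> ennreal) \<Rightarrow> bool" where
  "T1 X d \<longleftrightarrow> (\<forall>x\<in>X. \<forall>y\<in>X. d x y < \<infinity> \<longrightarrow> (\<exists>\<phi>. geod X d x y \<phi>))"

definition T2 :: "'a set \<Rightarrow> ('a \<Rightarrow> 'a \<Rightarrow> ennreal) \<Rightarrow> bool" where
  "T2 X d \<longleftrightarrow> (\<forall>x\<in>X. \<forall>y\<in>X. \<forall>A. x \<noteq> y \<longrightarrow> is_arc X d x y A \<longrightarrow> A = {q\<in>X. btw d x q y})"

definition RF :: "'a set \<Rightarrow> ('a \<Rightarrow> 'a \<Rightarrow> ennreal) \<Rightarrow> bool" where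
  "RF X d \<longleftrightarrow> ext_metric X d \<and> ext_complete X d \<and> T1 X d \<and> T2 X d"

lemma fin_realE:
  assumes "(a::ennreal) < \<infinity>"
  obtains r where "r \<ge> 0" "a = ennreal r"
  using assms by (auto simp: less_top_ennreal)

lemma cancel_mid:
  assumes h: "(a::ennreal) + c + (c + b) = e" "e \<le> a + b" "e < \<infinity>"
  shows "c = 0"
proof -
  have "a + c + (c + b) < \<infinity>" using h(1,3) by simp
  then have f: "a < \<infinity>" "b < \<infinity>" "c < \<infinity>" by simp_all
  obtain a' where a': "a' \<ge> 0" "a = ennreal a'" using fin_realE[OF f(1)] .
  obtain b' where b': "b' \<ge> 0" "b = ennreal b'" using fin_realE[OF f(2)] .
  obtain c' where c': "c' \<ge> 0" "c = ennreal c'" using fin_realE[OF f(3)] .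
  have "ennreal a' + ennreal c' + (ennreal c' + ennreal b') \<le> ennreal a' + ennreal b'"
    using h(1,2) a' b' c' by simp
  then have "c' = 0" using a'(1) b'(1) c'(1) by (simp flip: ennreal_plus)
  then show ?thesis using c' by simp
qed

lemma em_subset:
  assumes "ext_metric X d" "T \<subseteq> X"
  shows "ext_metric T d"
proof -
  have "\<forall>x\<in>T. \<forall>y\<in>T. d x y = 0 \<longleftrightarrow> x = y" using em_eq[OF assms(1)] assms(2) by blast
  moreover have "\<forall>x\<in>T. \<forall>y\<in>T. d x y = d y x" using em_sym[OF assms(1)] assms(2) by blast
  moreover have "\<forall>x\<in>T. \<forall>y\<in>T. \<forall>z\<in>T. d x z \<le> d x y + d y z" using em_tri[OF assms(1)] assms(2) by blast
  ultimately show ?thesis unfolding ext_metric_def by blast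
qed

lemma is_arcE:
  assumes "is_arc X d x y A"
  obtains \<gamma> :: "real \<Rightarrow> 'a" where "\<gamma> ` {0..1} = A" "A \<subseteq> X" "inj_on \<gamma> {0..1}" "\<gamma> 0 = x" "\<gamma> 1 = y"
    "\<forall>t\<in>{0..1}. \<forall>e::real. e > 0 \<longrightarrow> (\<exists>\<delta>>0. \<forall>s\<in>{0..1}. \<bar>s - t\<bar> < \<delta> \<longrightarrow> d (\<gamma> s) (\<gamma> t) < ennreal e)"
  using assms unfolding is_arc_def by blast

lemma is_arcI:
  fixes \<gamma> :: "real \<Rightarrow> 'a"
  assumes "\<gamma> ` {0..1} = A" "A \<subseteq> X" "inj_on \<gamma> {0..1}" "\<gamma> 0 = x" "\<gamma> 1 = y"
    "\<forall>t\<in>{0..1}. \<forall>e::real. e > 0 \<longrightarrow> (\<exists>\<delta>>0. \<forall>s\<in>{0..1}. \<bar>s - t\<bar> < \<delta> \<longrightarrow> d (\<gamma> s) (\<gamma> t) < ennreal e)"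
  shows "is_arc X d x y A"
  unfolding is_arc_def by (rule exI[of _ \<gamma>], intro conjI) (fact assms)+

lemma arc_mono: "is_arc T d x y A \<Longrightarrow> T \<subseteq> X \<Longrightarrow> is_arc X d x y A"
proof -
  assume a: "is_arc T d x y A" "T \<subseteq> X"
  from is_arcE[OF a(1)] obtain \<gamma> :: "real \<Rightarrow> 'a" where g: "\<gamma> ` {0..1} = A" "A \<subseteq> T" "inj_on \<gamma> {0..1}" "\<gamma> 0 = x" "\<gamma> 1 = y"
    "\<forall>t\<in>{0..1}. \<forall>e::real. e > 0 \<longrightarrow> (\<exists>\<delta>>0. \<forall>s\<in>{0..1}. \<bar>s - t\<bar> < \<delta> \<longrightarrow> d (\<gamma> s) (\<gamma> t) < ennreal e)" .
  have "A \<subseteq> X" using g(2) a(2) by (rule subset_trans)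
  then show ?thesis using is_arcI[OF g(1) _ g(3,4,5,6)] by blast
qed

lemma arc_sub: "is_arc X d x y A \<Longrightarrow> A \<subseteq> T \<Longrightarrow> is_arc T d x y A"
proof -
  assume a: "is_arc X d x y A" "A \<subseteq> T"
  from is_arcE[OF a(1)] obtain \<gamma> :: "real \<Rightarrow> 'a" where g: "\<gamma> ` {0..1} = A" "A \<subseteq> X" "inj_on \<gamma> {0..1}" "\<gamma> 0 = x" "\<gamma> 1 = y"
    "\<forall>t\<in>{0..1}. \<forall>e::real. e > 0 \<longrightarrow> (\<exists>\<delta>>0. \<forall>s\<in>{0..1}. \<bar>s - t\<bar> < \<delta> \<longrightarrow> d (\<gamma> s) (\<gamma> t) < ennreal e)" .
  then show ?thesis using is_arcI[OF g(1) a(2) g(3,4,5,6)] by blast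
qed

lemma arc_ends:
  assumes "is_arc X d x y A"
  shows "x \<in> A" "y \<in> A" "A \<subseteq> X"
proof -
  obtain \<gamma> :: "real \<Rightarrow> 'a" where g: "\<gamma> ` {0..1} = A" "A \<subseteq> X" "\<gamma> 0 = x" "\<gamma> 1 = y"
    using is_arcE[OF assms] by metis
  have "(0::real) \<in> {0..1}" "(1::real) \<in> {0..1}" by auto
  then show "x \<in> A" "y \<in> A" "A \<subseteq> X" using g by blast+
qed

lemma comp_em: "ext_metric X d \<Longrightarrow> ext_metric {y\<in>X. d x y < \<infinity>} d"
  by (rule em_subset) auto

lemma comp_fin:
  assumes "ext_metric X d" "x \<in> X" "y \<in> {y\<in>X. d x y < \<infinity>}" "z \<in> {y\<in>X. d x y < \<infinity>}"
  shows "d y z < \<infinity>"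
proof -
  have "d y x < \<infinity>" using assms em_sym[OF assms(1), of x y] by simp
  then show ?thesis using em_fin[OF assms(1), of y x z] assms by simp
qed

lemma comp_complete:
  assumes em: "ext_metric X d" and c: "ext_complete X d" and x: "x \<in> X"
  shows "ext_complete {y\<in>X. d x y < \<infinity>} d"
  unfolding ext_complete_def
proof (intro allI impI)
  fix s assume h: "(\<forall>n. s n \<in> {y\<in>X. d x y < \<infinity>}) \<and> ext_cauchy d s"
  then have "\<forall>n. s n \<in> X" by blast
  then have "ext_converges_in X d s" using c h unfolding ext_complete_def by blast
  then obtain z where z: "z \<in> X" "\<forall>e::real. e > 0 \<longrightarrow> (\<exists>N. \<forall>n\<ge>N. d (s n) z < ennreal e)"
    unfolding ext_converges_in_def by blast
  have "(1::real) > 0" by simp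
  then obtain N where N: "\<forall>n\<ge>N. d (s n) z < ennreal 1" using z(2) by blast
  then have h1: "d (s N) z < ennreal 1" by blast
  have "d (s N) z < \<infinity>" using order.strict_trans[OF h1 ennreal_less_top] by simp
  moreover have "d x (s N) < \<infinity>" "s N \<in> X" using h by auto
  ultimately have "d x z < \<infinity>" using em_fin[OF em x _ z(1)] by blast
  then show "ext_converges_in {y\<in>X. d x y < \<infinity>} d s"
    unfolding ext_converges_in_def using z by blast
qed

lemma iso_ends:
  assumes bij: "bij_betw \<phi> {0..L} A" and isom: "\<forall>s\<in>{0..L}. \<forall>t\<in>{0..L}. d (\<phi> s) (\<phi> t) = ennreal \<bar>s - t\<bar>"
    and x: "x \<in> A" and y: "y \<in> A" and dxy: "d x y = ennreal L" and L: "L \<ge> 0"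
  obtains "\<phi> 0 = x" "\<phi> L = y" | "\<phi> 0 = y" "\<phi> L = x"
proof -
  have im: "\<phi> ` {0..L} = A" using bij by (simp add: bij_betw_def)
  obtain s0 where s0: "s0 \<in> {0..L}" "\<phi> s0 = x" using x im by blast
  obtain s1 where s1: "s1 \<in> {0..L}" "\<phi> s1 = y" using y im by blast
  have "d (\<phi> s0) (\<phi> s1) = ennreal \<bar>s0 - s1\<bar>" using isom[rule_format, OF s0(1) s1(1)] .
  then have "ennreal \<bar>s0 - s1\<bar> = ennreal L" using s0(2) s1(2) dxy by simp
  then have "\<bar>s0 - s1\<bar> = L" using L by simp
  then have "(s0 = 0 \<and> s1 = L) \<or> (s0 = L \<and> s1 = 0)" using s0(1) s1(1) by (auto simp: abs_if split: if_splits)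
  then show ?thesis using that s0 s1 by blast
qed

lemma RF_T1:
  assumes RF: "R_forest X d"
  shows "T1 X d"
  unfolding T1_def
proof (intro ballI impI)
  fix x y assume x: "x \<in> X" and y: "y \<in> X" and f: "d x y < \<infinity>"
  have em: "ext_metric X d" using RF by (simp add: R_forest_def)
  show "\<exists>\<phi>. geod X d x y \<phi>"
  proof (cases "x = y")
    case True then show ?thesis using geod_refl[OF em x] by blast
  next
    case False
    define T where "T = {z\<in>X. d x z < \<infinity>}"
    have RT: "R_tree T d" using RF x by (simp add: R_forest_def T_def)
    have xT: "x \<in> T" using x em_zero[OF em x] by (simp add: T_def)
    have yT: "y \<in> T" using y f by (simp add: T_def)
    have TX: "T \<subseteq> X" by (auto simp: T_def)
    obtain A where A: "is_arc T d x y A" and iso: "isometric_to_interval d A (enn2real (d x y))"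
      using RT xT yT False unfolding R_tree_def by blast
    define L where "L = enn2real (d x y)"
    obtain \<phi> where bij: "bij_betw \<phi> {0..L} A" and isom: "\<forall>s\<in>{0..L}. \<forall>t\<in>{0..L}. d (\<phi> s) (\<phi> t) = ennreal \<bar>s - t\<bar>"
      using iso unfolding isometric_to_interval_def L_def by blast
    have L0: "L \<ge> 0" by (simp add: L_def)
    have dxy: "d x y = ennreal L" using f by (simp add: L_def less_top)
    have inX: "\<forall>t\<in>{0..L}. \<phi> t \<in> X" using bij arc_ends(3)[OF A] TX by (auto simp: bij_betw_def)
    from iso_ends[OF bij isom arc_ends(1)[OF A] arc_ends(2)[OF A] dxy L0]
    show ?thesis
    proof cases
      case 1
      have "geod X d x y \<phi>" unfolding geod_def L_def[symmetric] using f 1 inX isom by blast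
      then show ?thesis by blast
    next
      case 2
      have dyx: "d y x = d x y" using em_sym[OF em x y] by simp
      have "geod X d y x \<phi>" unfolding geod_def dyx L_def[symmetric] using f 2 inX isom by blast
      from geod_rev(1)[OF em this y x] show ?thesis by blast
    qed
  qed
qed

lemma RF_T2:
  assumes RF: "R_forest X d"
  shows "T2 X d"
  unfolding T2_def
proof (intro ballI allI impI)
  fix x y A assume x: "x \<in> X" and y: "y \<in> X" and xy: "x \<noteq> y" and A: "is_arc X d x y A"
  have em: "ext_metric X d" using RF by (simp add: R_forest_def)
  define T where "T = {z\<in>X. d x z < \<infinity>}"
  have RT: "R_tree T d" using RF x by (simp add: R_forest_def T_def)
  have AT: "A \<subseteq> T" using arc_fin[OF em A] by (simp add: T_def)
  have AT': "is_arc T d x y A" using arc_sub[OF A AT] .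
  have yT: "y \<in> T" using arc_ends(2)[OF A] AT by blast
  have xT: "x \<in> T" using arc_ends(1)[OF A] AT by blast
  have f: "d x y < \<infinity>" using yT by (simp add: T_def)
  have TX: "T \<subseteq> X" by (auto simp: T_def)
  have uniq: "\<And>B. is_arc T d x y B \<Longrightarrow> B = A"
    using RT xT yT xy AT' unfolding R_tree_def by blast
  have iso: "isometric_to_interval d A (enn2real (d x y))"
    using RT xT yT xy AT' unfolding R_tree_def by blast
  define L where "L = enn2real (d x y)"
  obtain \<phi> where bij: "bij_betw \<phi> {0..L} A" and isom: "\<forall>s\<in>{0..L}. \<forall>t\<in>{0..L}. d (\<phi> s) (\<phi> t) = ennreal \<bar>s - t\<bar>"
    using iso unfolding isometric_to_interval_def L_def by blast
  have L0: "L \<ge> 0" by (simp add: L_def)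
  have dxy: "d x y = ennreal L" using f by (simp add: L_def less_top)
  have im: "\<phi> ` {0..L} = A" using bij by (simp add: bij_betw_def)
  show "A = {q\<in>X. btw d x q y}"
  proof
    show "A \<subseteq> {q\<in>X. btw d x q y}"
    proof
      fix q assume q: "q \<in> A"
      then obtain t where t: "t \<in> {0..L}" "\<phi> t = q" using im by blast
      have "0 \<in> {0..L}" "L \<in> {0..L}" using L0 by auto
      from iso_ends[OF bij isom arc_ends(1)[OF A] arc_ends(2)[OF A] dxy L0]
      have "d x q + d q y = ennreal L"
      proof cases
        case 1
        have "d x q = ennreal \<bar>0 - t\<bar>" using isom[rule_format, OF \<open>0 \<in> {0..L}\<close> t(1)] 1 t(2) by simp
        moreover have "d q y = ennreal \<bar>t - L\<bar>" using isom[rule_format, OF t(1) \<open>L \<in> {0..L}\<close>] 1 t(2) by simp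
        ultimately have "d x q = ennreal t" "d q y = ennreal (L - t)" using t(1) by auto
        then show ?thesis using t by (simp flip: ennreal_plus)
      next
        case 2
        have "d x q = ennreal \<bar>L - t\<bar>" using isom[rule_format, OF \<open>L \<in> {0..L}\<close> t(1)] 2 t(2) by simp
        moreover have "d q y = ennreal \<bar>t - 0\<bar>" using isom[rule_format, OF t(1) \<open>0 \<in> {0..L}\<close>] 2 t(2) by simp
        ultimately have "d x q = ennreal (L - t)" "d q y = ennreal t" using t(1) by auto
        then show ?thesis using t by (simp flip: ennreal_plus)
      qed
      then show "q \<in> {q\<in>X. btw d x q y}" unfolding btw_def using dxy f q arc_ends(3)[OF A] by auto
    qed
    show "{q\<in>X. btw d x q y} \<subseteq> A"
    proof
      fix q assume "q \<in> {q\<in>X. btw d x q y}"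
      then have qX: "q \<in> X" and b: "d x q + d q y = d x y" by (auto simp: btw_def)
      show "q \<in> A"
      proof (cases "q = x \<or> q = y")
        case True then show ?thesis using arc_ends[OF A] by blast
      next
        case False
        have "d x q + d q y < \<infinity>" using b f by simp
        then have fq: "d x q < \<infinity>" "d q y < \<infinity>" by simp_all
        obtain \<phi>1 where g1: "geod X d x q \<phi>1" using RF_T1[OF RF] x qX fq unfolding T1_def by blast
        obtain \<phi>2 where g2: "geod X d q y \<phi>2" using RF_T1[OF RF] y qX fq unfolding T1_def by blast
        have int: "\<forall>t\<in>{0..enn2real (d x q)}. \<forall>u\<in>{0..enn2real (d q y)}. \<phi>1 t = \<phi>2 u \<longrightarrow> \<phi>1 t = q"
        proof (intro ballI impI)
          fix t u assume t: "t \<in> {0..enn2real (d x q)}" and u: "u \<in> {0..enn2real (d q y)}" and e: "\<phi>1 t = \<phi>2 u"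
          define r where "r = \<phi>1 t"
          have rX: "r \<in> X" using geodD(4)[OF g1 t] by (simp add: r_def)
          have b1: "d x r + d r q = d x q" using geod_btw[OF g1 t] by (simp add: btw_def r_def)
          have b2: "d q r + d r y = d q y" using geod_btw[OF g2 u] e by (simp add: btw_def r_def)
          have s: "d q r = d r q" using em_sym[OF em qX rX] .
          have "d x r + d r q + (d r q + d r y) = d x y" using b b1 b2 s by simp
          moreover have "d x y \<le> d x r + d r y" using em_tri[OF em x rX y] .
          ultimately have "d r q = 0" using cancel_mid f by blast
          then show "\<phi>1 t = q" using em_eq[OF em rX qX] by (simp add: r_def)
        qed
        have A': "is_arc X d x y (\<phi>1 ` {0..enn2real (d x q)} \<union> \<phi>2 ` {0..enn2real (d q y)})"
          using concat_arc[OF em g1 g2 xy int] .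
        have "is_arc T d x y (\<phi>1 ` {0..enn2real (d x q)} \<union> \<phi>2 ` {0..enn2real (d q y)})"
          using arc_sub[OF A'] arc_fin[OF em A'] by (simp add: T_def)
        then have eq: "\<phi>1 ` {0..enn2real (d x q)} \<union> \<phi>2 ` {0..enn2real (d q y)} = A" by (rule uniq)
        have "enn2real (d x q) \<in> {0..enn2real (d x q)}" by simp
        then have "q \<in> \<phi>1 ` {0..enn2real (d x q)}" using imageI[of _ _ \<phi>1] geodD(3)[OF g1] by metis
        then show ?thesis using eq by blast
      qed
    qed
  qed
qed

lemma R_forest_RF: "R_forest X d \<Longrightarrow> RF X d"
  unfolding RF_def using RF_T1 RF_T2 by (auto simp: R_forest_def)

lemma RF_btw_img:
  assumes "RF X d" "geod X d x y \<phi>" "x \<noteq> y" "x \<in> X" "y \<in> X"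
  shows "\<phi> ` {0..enn2real (d x y)} = {q\<in>X. btw d x q y}"
  using assms geod_arc[of X d x y \<phi>] unfolding RF_def T2_def by blast

lemma RF_R_forest:
  assumes RF: "RF X d"
  shows "R_forest X d"
proof -
  have em: "ext_metric X d" and c: "ext_complete X d" and t1: "T1 X d" and t2: "T2 X d"
    using RF by (auto simp: RF_def)
  have "R_tree {y\<in>X. d x y < \<infinity>} d" if x: "x \<in> X" for x
  proof -
    define T where "T = {y\<in>X. d x y < \<infinity>}"
    have TX: "T \<subseteq> X" by (auto simp: T_def)
    have main: "(\<exists>!A. is_arc T d y z A) \<and> (\<forall>A. is_arc T d y z A \<longrightarrow> isometric_to_interval d A (enn2real (d y z)))"
      if y: "y \<in> T" and z: "z \<in> T" and yz: "y \<noteq> z" for y z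
    proof -
      have f: "d y z < \<infinity>" using comp_fin[OF em x] y z by (simp add: T_def)
      have yX: "y \<in> X" "z \<in> X" using y z TX by auto
      obtain \<phi> where g: "geod X d y z \<phi>" using t1 yX f unfolding T1_def by blast
      define Aa where "Aa = \<phi> ` {0..enn2real (d y z)}"
      have arcX: "is_arc X d y z Aa" using geod_arc[OF em g yz] by (simp add: Aa_def)
      have "Aa \<subseteq> T"
      proof
        fix w assume "w \<in> Aa"
        then have "w \<in> X" "d y w < \<infinity>" using arc_fin[OF em arcX] by auto
        moreover have "d x y < \<infinity>" using y by (simp add: T_def)
        ultimately show "w \<in> T" using em_fin[OF em x yX(1)] by (simp add: T_def)
      qed
      then have arcT: "is_arc T d y z Aa" using arc_sub[OF arcX] by blast
      have eqA: "Aa = {q\<in>X. btw d y q z}" using RF_btw_img[OF RF g yz yX] by (simp add: Aa_def)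
      have u: "B = Aa" if "is_arc T d y z B" for B
      proof -
        have "is_arc X d y z B" using arc_mono[OF that TX] .
        then show ?thesis using t2 yX yz eqA unfolding T2_def by blast
      qed
      have iso: "isometric_to_interval d Aa (enn2real (d y z))"
        unfolding isometric_to_interval_def
      proof (intro exI conjI)
        show "bij_betw \<phi> {0..enn2real (d y z)} Aa" unfolding bij_betw_def Aa_def using geod_inj[OF em g] by blast
        show "\<forall>s\<in>{0..enn2real (d y z)}. \<forall>t\<in>{0..enn2real (d y z)}. d (\<phi> s) (\<phi> t) = ennreal \<bar>s - t\<bar>"
          using geodD(5)[OF g] by blast
      qed
      show ?thesis using arcT u iso by blast
    qed
    have "ext_metric T d" unfolding T_def by (rule comp_em[OF em])
    moreover have "\<forall>y\<in>T. \<forall>z\<in>T. d y z < \<infinity>" using comp_fin[OF em x] by (simp add: T_def)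
    moreover have "ext_complete T d" unfolding T_def by (rule comp_complete[OF em c x])
    ultimately have "R_tree T d" unfolding R_tree_def using main by blast
    then show ?thesis by (simp add: T_def)
  qed
  then show ?thesis unfolding R_forest_def using em c by blast
qed

definition closedS :: "'a set \<Rightarrow> ('a \<Rightarrow> 'a \<Rightarrow> ennreal) \<Rightarrow> 'a set \<Rightarrow> bool" where
  "closedS X d S \<longleftrightarrow> S \<subseteq> X \<and> (\<forall>y\<in>X. (\<forall>e::real. e > 0 \<longrightarrow> (\<exists>s\<in>S. d s y < ennreal e)) \<longrightarrow> y \<in> S)"

definition convexS :: "'a set \<Rightarrow> ('a \<Rightarrow> 'a \<Rightarrow> ennreal) \<Rightarrow> 'a set \<Rightarrow> bool" where
  "convexS X d S \<longleftrightarrow> S \<subseteq> X \<and> (\<forall>s1\<in>S. \<forall>s2\<in>S. \<forall>q\<in>X. btw d s1 q s2 \<longrightarrow> q \<in> S)"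

definition gate :: "('a \<Rightarrow> 'a \<Rightarrow> ennreal) \<Rightarrow> 'a set \<Rightarrow> 'a \<Rightarrow> 'a \<Rightarrow> bool" where
  "gate d S y p \<longleftrightarrow> p \<in> S \<and> (\<forall>s\<in>S. d s y = d s p + d p y)"

lemma btw_sym:
  assumes "ext_metric X d" "x \<in> X" "q \<in> X" "y \<in> X" "btw d x q y"
  shows "btw d y q x"
  using assms em_sym[OF assms(1)] unfolding btw_def by (simp add: add.commute)

lemma btw_self:
  assumes "ext_metric X d" "x \<in> X" "q \<in> X" "btw d x q x"
  shows "q = x"
proof -
  have "d x q + d q x = 0" using assms(4) em_zero[OF assms(1,2)] by (simp add: btw_def)
  then have "d x q = 0" by simp
  then show ?thesis using em_eq[OF assms(1,2,3)] by simp
qed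

lemma btw_fin:
  assumes "btw d x q y"
  shows "d x q < \<infinity>" "d q y < \<infinity>" "d x y < \<infinity>"
proof -
  have "d x q + d q y < \<infinity>" using assms by (simp add: btw_def)
  then show "d x q < \<infinity>" "d q y < \<infinity>" by simp_all
  show "d x y < \<infinity>" using assms by (simp add: btw_def)
qed

lemma RF_em: "RF X d \<Longrightarrow> ext_metric X d" by (simp add: RF_def)
lemma RF_T1D: "RF X d \<Longrightarrow> x \<in> X \<Longrightarrow> y \<in> X \<Longrightarrow> d x y < \<infinity> \<Longrightarrow> \<exists>\<phi>. geod X d x y \<phi>"
  by (simp add: RF_def T1_def)

lemma RF_T2D: "RF X d \<Longrightarrow> x \<in> X \<Longrightarrow> y \<in> X \<Longrightarrow> x \<noteq> y \<Longrightarrow> is_arc X d x y A \<Longrightarrow> A = {q\<in>X. btw d x q y}"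
  unfolding RF_def T2_def by blast

lemma seg_order:
  assumes RF: "RF X d" and X: "u \<in> X" "v \<in> X" "a \<in> X" "q \<in> X"
    and ba: "btw d u a v" and bq: "btw d u q v"
  shows "d u q \<le> d u a \<Longrightarrow> btw d u q a" and "d u a \<le> d u q \<Longrightarrow> btw d a q v"
proof -
  have em: "ext_metric X d" using RF by (rule RF_em)
  have f: "d u v < \<infinity>" using ba by (simp add: btw_def)
  have "(d u q \<le> d u a \<longrightarrow> btw d u q a) \<and> (d u a \<le> d u q \<longrightarrow> btw d a q v)"
  proof (cases "u = v")
    case True
    then have "a = u" "q = u" using btw_self[OF em X(1) X(3)] btw_self[OF em X(1) X(4)] ba bq by auto
    then show ?thesis using em_zero[OF em X(1)] True by (simp add: btw_def)
  next
    case False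
    obtain \<phi> where g: "geod X d u v \<phi>" using RF_T1D[OF RF X(1,2) f] by blast
    define L where "L = enn2real (d u v)"
    have img: "\<phi> ` {0..L} = {q\<in>X. btw d u q v}" using RF_btw_img[OF RF g False X(1,2)] by (simp add: L_def)
    obtain ta where ta: "ta \<in> {0..L}" "\<phi> ta = a" using img X(3) ba by (metis (mono_tags, lifting) imageE mem_Collect_eq)
    obtain tq where tq: "tq \<in> {0..L}" "\<phi> tq = q" using img X(4) bq by (metis (mono_tags, lifting) imageE mem_Collect_eq)
    have dua: "d u a = ennreal ta" "d a v = ennreal (L - ta)" using geod_dist[OF g, of ta] ta by (auto simp: L_def)
    have duq: "d u q = ennreal tq" "d q v = ennreal (L - tq)" using geod_dist[OF g, of tq] tq by (auto simp: L_def)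
    have daq: "d a q = ennreal \<bar>ta - tq\<bar>" using geodD(5)[OF g, of ta tq] ta tq by (auto simp: L_def)
    have dqa: "d q a = ennreal \<bar>tq - ta\<bar>" using geodD(5)[OF g, of tq ta] ta tq by (auto simp: L_def)
    show ?thesis
    proof (intro conjI impI)
      assume "d u q \<le> d u a"
      then have le: "tq \<le> ta" using dua duq ta tq by simp
      have "d u q + d q a = ennreal (tq + (ta - tq))" using duq dqa le tq ta by (simp flip: ennreal_plus)
      then show "btw d u q a" unfolding btw_def using dua by simp
    next
      assume "d u a \<le> d u q"
      then have le: "ta \<le> tq" using dua duq ta tq by simp
      have "d a q + d q v = ennreal ((tq - ta) + (L - tq))" using daq duq le tq ta by (simp flip: ennreal_plus)
      then show "btw d a q v" unfolding btw_def using dua by simp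
    qed
  qed
  then show "d u q \<le> d u a \<Longrightarrow> btw d u q a" and "d u a \<le> d u q \<Longrightarrow> btw d a q v" by blast+
qed


lemma gate_exists:
  assumes RF: "RF X d" and cl: "closedS X d S" and cv: "convexS X d S" and y: "y \<in> X"
    and s0: "s0 \<in> S" and f: "d s0 y < \<infinity>"
  shows "\<exists>p. gate d S y p"
proof -
  have em: "ext_metric X d" using RF by (rule RF_em)
  have SX: "S \<subseteq> X" using cl by (simp add: closedS_def)
  have s0X: "s0 \<in> X" using s0 SX by blast
  have cvx: "\<And>s1 s2 q. s1 \<in> S \<Longrightarrow> s2 \<in> S \<Longrightarrow> q \<in> X \<Longrightarrow> btw d s1 q s2 \<Longrightarrow> q \<in> S"
    using cv unfolding convexS_def by blast
  have f': "d y s0 < \<infinity>" using f em_sym[OF em y s0X] by simp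
  obtain \<phi> where g: "geod X d y s0 \<phi>" using RF_T1D[OF RF y s0X f'] by blast
  define L where "L = enn2real (d y s0)"
  have L0: "L \<ge> 0" by (simp add: L_def)
  define TS where "TS = {t\<in>{0..L}. \<phi> t \<in> S}"
  have LTS: "L \<in> TS" using geodD(3)[OF g] s0 L0 by (simp add: TS_def L_def)
  have ne: "TS \<noteq> {}" using LTS by blast
  have bdd: "bdd_below TS" unfolding bdd_below_def TS_def by auto
  define ts where "ts = Inf TS"
  have ts_le: "\<And>t. t \<in> TS \<Longrightarrow> ts \<le> t" unfolding ts_def using bdd by (simp add: cInf_lower)
  have ts0: "0 \<le> ts" unfolding ts_def using ne by (rule cInf_greatest) (simp add: TS_def)
  have tsL: "ts \<le> L" using ts_le[OF LTS] .
  have tsI: "ts \<in> {0..enn2real (d y s0)}" using ts0 tsL by (simp add: L_def)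
  define p where "p = \<phi> ts"
  have pX: "p \<in> X" using geodD(4)[OF g tsI] by (simp add: p_def)
  have pS: "p \<in> S"
  proof -
    have "\<forall>e::real. e > 0 \<longrightarrow> (\<exists>s\<in>S. d s p < ennreal e)"
    proof (intro allI impI)
      fix e :: real assume e: "e > 0"
      have "Inf TS < ts + e" using e by (simp add: ts_def)
      then obtain t where t: "t \<in> TS" "t < ts + e" using cInf_less_iff[OF ne bdd] by blast
      have tI: "t \<in> {0..enn2real (d y s0)}" using t(1) by (simp add: TS_def L_def)
      have "d (\<phi> t) p = ennreal \<bar>t - ts\<bar>" using geodD(5)[OF g tI tsI] by (simp add: p_def)
      also have "\<dots> < ennreal e" using t ts_le[OF t(1)] e by (simp add: ennreal_lessI)
      finally show "\<exists>s\<in>S. d s p < ennreal e" using t(1) by (auto simp: TS_def)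
    qed
    then show ?thesis using cl pX by (simp add: closedS_def)
  qed
  have below: "\<phi> t \<notin> S" if "t \<in> {0..ts}" "t < ts" for t
  proof
    assume "\<phi> t \<in> S"
    then have "t \<in> TS" using that tsL by (simp add: TS_def)
    then show False using ts_le[OF \<open>t \<in> TS\<close>] that(2) by linarith
  qed
  have gp: "geod X d y p \<phi>" using geod_sub[OF g tsI] by (simp add: p_def)
  have dyp: "d y p = ennreal ts" using geod_dist(1)[OF g tsI] by (simp add: p_def)
  have dpy: "d p y = ennreal ts" using dyp em_sym[OF em y pX] by simp
  have gate: "d s y = d s p + d p y" if sS: "s \<in> S" for s
  proof -
    have sX: "s \<in> X" using sS SX by blast
    show ?thesis
    proof (cases "d s y < \<infinity>")
      case False
      have "d s p = \<infinity>"
      proof (rule ccontr)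
        assume "d s p \<noteq> \<infinity>"
        then have "d s p + d p y < \<infinity>" using dpy by (simp add: less_top)
        then have "d s y < \<infinity>" using le_less_trans[OF em_tri[OF em sX pX y]] by blast
        then show False using False by simp
      qed
      moreover have "d s y = \<infinity>" using False by (simp add: less_top[symmetric])
      ultimately show ?thesis by simp
    next
      case fin: True
      show ?thesis
      proof (cases "s = p \<or> y = p")
        case True then show ?thesis using em_zero[OF em pX] by auto
      next
        case False
        then have sp: "s \<noteq> p" and yp: "y \<noteq> p" by auto
        have sy: "s \<noteq> y"
        proof
          assume "s = y"
          then have "0 \<in> TS" using sS L0 geodD(2)[OF g] by (simp add: TS_def)
          then have "ts = 0" using ts_le[OF \<open>0 \<in> TS\<close>] ts0 by linarith
          then show False using yp geodD(2)[OF g] by (simp add: p_def)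
        qed
        have fsp: "d s p < \<infinity>"
        proof -
          have "d s p \<le> d s y + d y p" using em_tri[OF em sX y pX] .
          also have "\<dots> < \<infinity>" using fin dyp by simp
          finally show ?thesis .
        qed
        obtain \<psi> where g1: "geod X d s p \<psi>" using RF_T1D[OF RF sX pX fsp] by blast
        have ets: "enn2real (d y p) = ts" using dyp ts0 by simp
        have epy: "enn2real (d p y) = ts" using dpy ts0 by simp
        define \<rho> where "\<rho> = (\<lambda>t. \<phi> (enn2real (d y p) - t))"
        have g2: "geod X d p y \<rho>" using geod_rev(1)[OF em gp y pX] by (simp add: \<rho>_def)
        have int: "\<forall>a\<in>{0..enn2real (d s p)}. \<forall>b\<in>{0..enn2real (d p y)}. \<psi> a = \<rho> b \<longrightarrow> \<psi> a = p"
        proof (intro ballI impI)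
          fix a b assume a: "a \<in> {0..enn2real (d s p)}" and b: "b \<in> {0..enn2real (d p y)}" and e: "\<psi> a = \<rho> b"
          have rX: "\<psi> a \<in> X" using geodD(4)[OF g1 a] .
          have "btw d s (\<psi> a) p" using geod_btw[OF g1 a] .
          then have rS: "\<psi> a \<in> S" using cvx[OF sS pS rX] by blast
          have bI: "ts - b \<in> {0..ts}" using b epy by simp
          have "\<phi> (ts - b) \<in> S" using rS e by (simp add: \<rho>_def ets)
          then have "\<not> (ts - b < ts)" using below[OF bI] by blast
          then have "b = 0" using b by simp
          then show "\<psi> a = p" using e by (simp add: \<rho>_def ets p_def[symmetric])
        qed
        have arc: "is_arc X d s y (\<psi> ` {0..enn2real (d s p)} \<union> \<rho> ` {0..enn2real (d p y)})"
          using concat_arc[OF em g1 g2 sy int] .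
        then have eq: "\<psi> ` {0..enn2real (d s p)} \<union> \<rho> ` {0..enn2real (d p y)} = {q\<in>X. btw d s q y}"
          using RF_T2D[OF RF sX y sy arc] by blast
        have "enn2real (d s p) \<in> {0..enn2real (d s p)}" by simp
        moreover have "p = \<psi> (enn2real (d s p))" using geodD(3)[OF g1] by simp
        ultimately have "p \<in> \<psi> ` {0..enn2real (d s p)}" by (rule rev_image_eqI)
        then have "btw d s p y" using eq by blast
        then show ?thesis by (simp add: btw_def)
      qed
    qed
  qed
  show ?thesis unfolding gate_def using pS gate by blast
qed

lemma enn_eps_zero:
  assumes "\<forall>e::real. e > 0 \<longrightarrow> x < ennreal e"
  shows "x = 0"
proof -
  have "x < ennreal 1" using assms[rule_format, of 1] by simp
  then have "x < \<infinity>" using order.strict_trans[OF \<open>x < ennreal 1\<close> ennreal_less_top] by simp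
  then obtain r where r: "r \<ge> 0" "x = ennreal r" by (rule fin_realE)
  show ?thesis
  proof (rule ccontr)
    assume "x \<noteq> 0"
    then have "r > 0" using r by auto
    then have "x < ennreal r" using assms by blast
    then show False using r by simp
  qed
qed

lemma enn_add_lt:
  assumes "a < ennreal e1" "b < ennreal e2" "e1 \<ge> 0" "e2 \<ge> 0"
  shows "a + b < ennreal (e1 + e2)"
proof -
  have "a + b < ennreal e1 + ennreal e2" using add_strict_mono[OF assms(1,2)] .
  then show ?thesis using assms(3,4) by (simp flip: ennreal_plus)
qed

lemma iso_embD:
  assumes "iso_emb X dX Y dY f"
  shows "\<And>x. x \<in> X \<Longrightarrow> f x \<in> Y" "\<And>x y. x \<in> X \<Longrightarrow> y \<in> X \<Longrightarrow> dY (f x) (f y) = dX x y"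
  using assms unfolding iso_emb_def by auto

lemma iso_emb_inj:
  assumes "iso_emb X dX Y dY f" "ext_metric X dX"
  shows "inj_on f X"
proof (rule inj_onI)
  fix x y assume x: "x \<in> X" and y: "y \<in> X" and e: "f x = f y"
  have "dX x y = dY (f x) (f y)" using iso_embD(2)[OF assms(1) x y] by simp
  also have "\<dots> = dY (f x) (f x)" using e by simp
  also have "\<dots> = dX x x" using iso_embD(2)[OF assms(1) x x] .
  also have "\<dots> = 0" using em_zero[OF assms(2) x] .
  finally show "x = y" using em_eq[OF assms(2) x y] by simp
qed

lemma emb_convex:
  assumes RA: "RF A dA" and RX: "RF X d" and e: "iso_emb A dA X d f"
  shows "convexS X d (f ` A)"
  unfolding convexS_def
proof (intro conjI ballI impI)
  show "f ` A \<subseteq> X" using iso_embD(1)[OF e] by blast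
  have emA: "ext_metric A dA" using RA by (rule RF_em)
  have emX: "ext_metric X d" using RX by (rule RF_em)
  fix s1 s2 q assume s1: "s1 \<in> f ` A" and s2: "s2 \<in> f ` A" and q: "q \<in> X" and b: "btw d s1 q s2"
  obtain a1 where a1: "a1 \<in> A" "s1 = f a1" using s1 by blast
  obtain a2 where a2: "a2 \<in> A" "s2 = f a2" using s2 by blast
  have s1X: "s1 \<in> X" using iso_embD(1)[OF e a1(1)] a1(2) by simp
  have dd: "d s1 s2 = dA a1 a2" using iso_embD(2)[OF e a1(1) a2(1)] a1 a2 by simp
  show "q \<in> f ` A"
  proof (cases "a1 = a2")
    case True
    then have "q = s1" using btw_self[OF emX s1X q] b a1 a2 by simp
    then show ?thesis using s1 by simp
  next
    case False
    have fA: "dA a1 a2 < \<infinity>" using b dd by (simp add: btw_def)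
    obtain \<phi> where g: "geod A dA a1 a2 \<phi>" using RF_T1D[OF RA a1(1) a2(1) fA] by blast
    have ne: "s1 \<noteq> s2" using False dd em_eq[OF emA a1(1) a2(1)] em_zero[OF emX s1X] by auto
    have s2X: "s2 \<in> X" using iso_embD(1)[OF e a2(1)] a2(2) by simp
    have gX: "geod X d s1 s2 (f \<circ> \<phi>)"
      unfolding geod_def dd o_def
    proof (intro conjI ballI)
      show "dA a1 a2 < \<infinity>" using fA .
      show "f (\<phi> 0) = s1" using geodD(2)[OF g] a1 by simp
      show "f (\<phi> (enn2real (dA a1 a2))) = s2" using geodD(3)[OF g] a2 by simp
      fix t assume t: "t \<in> {0..enn2real (dA a1 a2)}"
      show "f (\<phi> t) \<in> X" using iso_embD(1)[OF e geodD(4)[OF g t]] .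
      fix s assume s: "s \<in> {0..enn2real (dA a1 a2)}"
      show "d (f (\<phi> t)) (f (\<phi> s)) = ennreal \<bar>t - s\<bar>"
        using iso_embD(2)[OF e geodD(4)[OF g t] geodD(4)[OF g s]] geodD(5)[OF g t s] by simp
    qed
    have "(f \<circ> \<phi>) ` {0..enn2real (d s1 s2)} = {q\<in>X. btw d s1 q s2}"
      using RF_btw_img[OF RX gX ne s1X s2X] .
    then obtain t where t: "t \<in> {0..enn2real (d s1 s2)}" "q = f (\<phi> t)" using q b by force
    have "\<phi> t \<in> A" using geodD(4)[OF g] t(1) dd by simp
    then show ?thesis using t(2) by blast
  qed
qed

lemma one_over_Suc_le: "m \<ge> N \<Longrightarrow> 1 / real (Suc m) \<le> 1 / real (Suc N)"
  by (intro divide_left_mono) auto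

lemma arch_eps:
  assumes "(e::real) > 0"
  obtains N where "1 / real (Suc N) < e"
proof -
  obtain N where N: "1 / e < real N" using reals_Archimedean2 by blast
  then have "1 < e * real N" using assms by (simp add: field_simps)
  then have "1 < e * real (Suc N)" using assms by (smt (verit) mult_left_mono of_nat_Suc)
  then have "1 / real (Suc N) < e" by (simp add: field_simps)
  then show ?thesis using that by blast
qed

lemma emb_closed:
  assumes RA: "RF A dA" and emX: "ext_metric X d" and e: "iso_emb A dA X d f"
  shows "closedS X d (f ` A)"
proof -
  have emA: "ext_metric A dA" and cA: "ext_complete A dA" using RA by (auto simp: RF_def)
  have sub: "f ` A \<subseteq> X" using iso_embD(1)[OF e] by blast
  have "y \<in> f ` A" if y: "y \<in> X" and H: "\<forall>\<epsilon>::real. \<epsilon> > 0 \<longrightarrow> (\<exists>s\<in>f ` A. d s y < ennreal \<epsilon>)" for y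
  proof -
    have "\<forall>n::nat. \<exists>a. a \<in> A \<and> d (f a) y < ennreal (1 / real (Suc n))"
    proof
      fix n :: nat
      have "1 / real (Suc n) > 0" by simp
      then obtain s where "s \<in> f ` A" "d s y < ennreal (1 / real (Suc n))" using H by blast
      then show "\<exists>a. a \<in> A \<and> d (f a) y < ennreal (1 / real (Suc n))" by blast
    qed
    from choice[OF this] obtain a where a: "\<forall>n. a n \<in> A \<and> d (f (a n)) y < ennreal (1 / real (Suc n))" by blast
    have aA: "\<And>n. a n \<in> A" using a by blast
    have ad: "\<And>n. d (f (a n)) y < ennreal (1 / real (Suc n))" using a by blast
    have faX: "\<And>n. f (a n) \<in> X" using iso_embD(1)[OF e aA] .
    have bound: "dA (a m) (a n) < ennreal (1 / real (Suc m) + 1 / real (Suc n))" for m n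
    proof -
      have "dA (a m) (a n) = d (f (a m)) (f (a n))" using iso_embD(2)[OF e aA aA] by simp
      also have "\<dots> \<le> d (f (a m)) y + d y (f (a n))" using em_tri[OF emX faX y faX] .
      also have "d y (f (a n)) = d (f (a n)) y" using em_sym[OF emX y faX] .
      also have "d (f (a m)) y + d (f (a n)) y < ennreal (1 / real (Suc m) + 1 / real (Suc n))"
        using enn_add_lt[OF ad ad] by simp
      finally show ?thesis .
    qed
    have cauchy: "ext_cauchy dA a"
      unfolding ext_cauchy_def
    proof (intro allI impI)
      fix \<epsilon> :: real assume \<epsilon>: "\<epsilon> > 0"
      obtain N where N: "1 / real (Suc N) < \<epsilon> / 2" using arch_eps[of "\<epsilon>/2"] \<epsilon> by auto
      have "dA (a m) (a n) < ennreal \<epsilon>" if "m \<ge> N" "n \<ge> N" for m n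
      proof -
        have "1 / real (Suc m) + 1 / real (Suc n) \<le> \<epsilon>"
          using one_over_Suc_le[OF that(1)] one_over_Suc_le[OF that(2)] N by linarith
        then have "ennreal (1 / real (Suc m) + 1 / real (Suc n)) \<le> ennreal \<epsilon>" by (rule ennreal_leI)
        then show ?thesis using bound[of m n] by (rule order.strict_trans2[rotated])
      qed
      then show "\<exists>N. \<forall>m\<ge>N. \<forall>n\<ge>N. dA (a m) (a n) < ennreal \<epsilon>" by blast
    qed
    then obtain a0 where a0: "a0 \<in> A" and conv: "\<forall>\<epsilon>::real. \<epsilon> > 0 \<longrightarrow> (\<exists>N. \<forall>n\<ge>N. dA (a n) a0 < ennreal \<epsilon>)"
      using cA aA unfolding ext_complete_def ext_converges_in_def by blast
    have fa0: "f a0 \<in> X" using iso_embD(1)[OF e a0] .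
    have "d (f a0) y = 0"
    proof (rule enn_eps_zero, intro allI impI)
      fix \<epsilon> :: real assume \<epsilon>: "\<epsilon> > 0"
      obtain N1 where N1: "\<forall>n\<ge>N1. dA (a n) a0 < ennreal (\<epsilon>/2)" using conv \<epsilon> by (meson half_gt_zero)
      obtain N2 where N2: "1 / real (Suc N2) < \<epsilon> / 2" using arch_eps[of "\<epsilon>/2"] \<epsilon> by auto
      define n where "n = max N1 N2"
      have "d (f a0) y \<le> d (f a0) (f (a n)) + d (f (a n)) y" using em_tri[OF emX fa0 faX y] .
      also have "d (f a0) (f (a n)) = dA (a n) a0"
        using iso_embD(2)[OF e a0 aA] em_sym[OF emA a0 aA] by simp
      also have "dA (a n) a0 + d (f (a n)) y < ennreal (\<epsilon>/2 + \<epsilon>/2)"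
      proof (rule enn_add_lt)
        show "dA (a n) a0 < ennreal (\<epsilon>/2)" using N1 by (simp add: n_def)
        have "1 / real (Suc n) \<le> 1 / real (Suc N2)" by (rule one_over_Suc_le) (simp add: n_def)
        then have "ennreal (1 / real (Suc n)) \<le> ennreal (\<epsilon>/2)" using N2 by (intro ennreal_leI) linarith
        then show "d (f (a n)) y < ennreal (\<epsilon>/2)" using ad[of n] by (rule order.strict_trans2[rotated])
      qed (use \<epsilon> in auto)
      finally show "d (f a0) y < ennreal \<epsilon>" by simp
    qed
    then have "f a0 = y" using em_eq[OF emX fa0 y] by simp
    then show ?thesis using a0 by blast
  qed
  then show ?thesis unfolding closedS_def using sub by blast
qed

lemma geod_emb:
  assumes g: "geod X dX x y \<phi>" and e: "iso_emb X dX Y dY f" and x: "x \<in> X" and y: "y \<in> X"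
  shows "geod (f ` X) dY (f x) (f y) (f \<circ> \<phi>)"
proof -
  have dd: "dY (f x) (f y) = dX x y" using iso_embD(2)[OF e x y] .
  show ?thesis
    unfolding geod_def dd o_def
  proof (intro conjI ballI)
    show "dX x y < \<infinity>" using geodD(1)[OF g] .
    show "f (\<phi> 0) = f x" using geodD(2)[OF g] by simp
    show "f (\<phi> (enn2real (dX x y))) = f y" using geodD(3)[OF g] by simp
    fix t assume t: "t \<in> {0..enn2real (dX x y)}"
    show "f (\<phi> t) \<in> f ` X" using geodD(4)[OF g t] by blast
    fix s assume s: "s \<in> {0..enn2real (dX x y)}"
    show "dY (f (\<phi> t)) (f (\<phi> s)) = ennreal \<bar>t - s\<bar>"
      using iso_embD(2)[OF e geodD(4)[OF g t] geodD(4)[OF g s]] geodD(5)[OF g t s] by simp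
  qed
qed

lemma RF_transfer:
  assumes RX: "RF X dX" and e: "iso_emb X dX Y dY f"
  shows "RF (f ` X) dY"
proof -
  have emX: "ext_metric X dX" and cX: "ext_complete X dX" using RX by (auto simp: RF_def)
  have inj: "inj_on f X" using iso_emb_inj[OF e emX] .
  define g where "g = inv_into X f"
  have gf: "\<And>x. x \<in> X \<Longrightarrow> g (f x) = x" using inv_into_f_f[OF inj] by (simp add: g_def)
  have gX: "\<And>u. u \<in> f ` X \<Longrightarrow> g u \<in> X" by (simp add: g_def inv_into_into)
  have fg: "\<And>u. u \<in> f ` X \<Longrightarrow> f (g u) = u" by (simp add: g_def f_inv_into_f)
  have dist: "\<And>x y. x \<in> X \<Longrightarrow> y \<in> X \<Longrightarrow> dY (f x) (f y) = dX x y" using iso_embD(2)[OF e] .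
  have distg: "\<And>u v. u \<in> f ` X \<Longrightarrow> v \<in> f ` X \<Longrightarrow> dY u v = dX (g u) (g v)"
  proof -
    fix u v assume u: "u \<in> f ` X" and v: "v \<in> f ` X"
    have "dY u v = dY (f (g u)) (f (g v))" using fg[OF u] fg[OF v] by simp
    also have "\<dots> = dX (g u) (g v)" using dist[OF gX[OF u] gX[OF v]] .
    finally show "dY u v = dX (g u) (g v)" .
  qed
  have em: "ext_metric (f ` X) dY"
    unfolding ext_metric_def
  proof (intro conjI ballI)
    fix u v assume u: "u \<in> f ` X" and v: "v \<in> f ` X"
    have "dY u v = 0 \<longleftrightarrow> g u = g v" using distg[OF u v] em_eq[OF emX gX[OF u] gX[OF v]] by simp
    also have "\<dots> \<longleftrightarrow> u = v" using fg[OF u] fg[OF v] by metis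
    finally show "dY u v = 0 \<longleftrightarrow> u = v" .
    show "dY u v = dY v u" using distg[OF u v] distg[OF v u] em_sym[OF emX gX[OF u] gX[OF v]] by simp
    fix w assume w: "w \<in> f ` X"
    show "dY u w \<le> dY u v + dY v w"
      using distg[OF u w] distg[OF u v] distg[OF v w] em_tri[OF emX gX[OF u] gX[OF v] gX[OF w]] by simp
  qed
  have c: "ext_complete (f ` X) dY"
    unfolding ext_complete_def
  proof (intro allI impI)
    fix s assume h: "(\<forall>n. s n \<in> f ` X) \<and> ext_cauchy dY s"
    have sX: "\<And>n. s n \<in> f ` X" using h by blast
    have "ext_cauchy dX (\<lambda>n. g (s n))"
      using h distg[OF sX sX] unfolding ext_cauchy_def by simp
    moreover have "\<forall>n. g (s n) \<in> X" using gX[OF sX] by blast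
    ultimately have "ext_converges_in X dX (\<lambda>n. g (s n))"
      using cX[unfolded ext_complete_def, rule_format, of "\<lambda>n. g (s n)"] by blast
    then obtain x0 where x0: "x0 \<in> X" "\<forall>e::real. e > 0 \<longrightarrow> (\<exists>N. \<forall>n\<ge>N. dX (g (s n)) x0 < ennreal e)"
      unfolding ext_converges_in_def by blast
    have dd: "\<And>n. dY (s n) (f x0) = dX (g (s n)) x0" using distg[OF sX, of "f x0"] gf[OF x0(1)] x0(1) by simp
    show "ext_converges_in (f ` X) dY s" unfolding ext_converges_in_def
    proof (rule bexI[of _ "f x0"])
      show "\<forall>e::real. e > 0 \<longrightarrow> (\<exists>N. \<forall>n\<ge>N. dY (s n) (f x0) < ennreal e)" using x0(2) dd by simp
      show "f x0 \<in> f ` X" using x0(1) by blast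
    qed
  qed
  have t1: "T1 (f ` X) dY"
    unfolding T1_def
  proof (intro ballI impI)
    fix u v assume u: "u \<in> f ` X" and v: "v \<in> f ` X" and fin: "dY u v < \<infinity>"
    obtain x y where x: "x \<in> X" "u = f x" and y: "y \<in> X" "v = f y" using u v by blast
    have "dX x y < \<infinity>" using fin dist[OF x(1) y(1)] x y by simp
    then obtain \<phi> where "geod X dX x y \<phi>" using RF_T1D[OF RX x(1) y(1)] by blast
    from geod_emb[OF this e x(1) y(1)] show "\<exists>\<phi>. geod (f ` X) dY u v \<phi>" using x y by blast
  qed
  have t2: "T2 (f ` X) dY"
    unfolding T2_def
  proof (intro ballI allI impI)
    fix u v B assume u: "u \<in> f ` X" and v: "v \<in> f ` X" and uv: "u \<noteq> v" and B: "is_arc (f ` X) dY u v B"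
    obtain x y where x: "x \<in> X" "u = f x" and y: "y \<in> X" "v = f y" using u v by blast
    have xy: "x \<noteq> y" using uv x y by blast
    from is_arcE[OF B] obtain \<gamma> :: "real \<Rightarrow> _" where gm: "\<gamma> ` {0..1} = B" "B \<subseteq> f ` X" "inj_on \<gamma> {0..1}" "\<gamma> 0 = u" "\<gamma> 1 = v"
      and gc: "\<forall>t\<in>{0..1}. \<forall>e::real. e > 0 \<longrightarrow> (\<exists>\<delta>>0. \<forall>s\<in>{0..1}. \<bar>s - t\<bar> < \<delta> \<longrightarrow> dY (\<gamma> s) (\<gamma> t) < ennreal e)" .
    have gB: "\<And>t. t \<in> {0..1} \<Longrightarrow> \<gamma> t \<in> f ` X" using gm(1,2) by blast
    have arcX: "is_arc X dX x y (g ` B)"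
    proof (rule is_arcI[of "g \<circ> \<gamma>"])
      show "(g \<circ> \<gamma>) ` {0..1} = g ` B" unfolding gm(1)[symmetric] by (rule image_comp[symmetric])
      show "g ` B \<subseteq> X" using gm(2) gX by blast
      show "inj_on (g \<circ> \<gamma>) {0..1}"
      proof (rule inj_onI)
        fix s t assume s: "s \<in> {0..1}" and t: "t \<in> {0..1}" and e: "(g \<circ> \<gamma>) s = (g \<circ> \<gamma>) t"
        then have "f (g (\<gamma> s)) = f (g (\<gamma> t))" by simp
        then have "\<gamma> s = \<gamma> t" using fg[OF gB[OF s]] fg[OF gB[OF t]] by simp
        then show "s = t" using gm(3) s t by (auto dest: inj_onD)
      qed
      show "(g \<circ> \<gamma>) 0 = x" using gm(4) x gf by simp
      show "(g \<circ> \<gamma>) 1 = y" using gm(5) y gf by simp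
      show "\<forall>t\<in>{0..1}. \<forall>e::real. e > 0 \<longrightarrow> (\<exists>\<delta>>0. \<forall>s\<in>{0..1}. \<bar>s - t\<bar> < \<delta> \<longrightarrow> dX ((g \<circ> \<gamma>) s) ((g \<circ> \<gamma>) t) < ennreal e)"
      proof (intro ballI allI impI)
        fix t :: real and e :: real assume t: "t \<in> {0..1}" and "e > 0"
        then obtain \<delta> where "\<delta> > 0" "\<forall>s\<in>{0..1}. \<bar>s - t\<bar> < \<delta> \<longrightarrow> dY (\<gamma> s) (\<gamma> t) < ennreal e" using gc by blast
        then show "\<exists>\<delta>>0. \<forall>s\<in>{0..1}. \<bar>s - t\<bar> < \<delta> \<longrightarrow> dX ((g \<circ> \<gamma>) s) ((g \<circ> \<gamma>) t) < ennreal e"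
          using distg[OF gB gB[OF t]] by auto
      qed
    qed
    have eq: "g ` B = {q\<in>X. btw dX x q y}" using RF_T2D[OF RX x(1) y(1) xy arcX] .
    have "B = f ` (g ` B)"
    proof -
      have "f ` (g ` B) = (\<lambda>u. f (g u)) ` B" by (simp add: image_comp)
      also have "\<dots> = B" using fg gm(2) by (auto simp: subset_iff intro!: image_eqI)
      finally show ?thesis by simp
    qed
    also have "\<dots> = f ` {q\<in>X. btw dX x q y}" using eq by simp
    also have "\<dots> = {w\<in>f ` X. btw dY u w v}"
    proof
      show "f ` {q\<in>X. btw dX x q y} \<subseteq> {w\<in>f ` X. btw dY u w v}"
        using dist x y unfolding btw_def by auto
      show "{w\<in>f ` X. btw dY u w v} \<subseteq> f ` {q\<in>X. btw dX x q y}"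
      proof
        fix w assume "w \<in> {w\<in>f ` X. btw dY u w v}"
        then obtain q where q: "q \<in> X" "w = f q" and b: "btw dY u w v" by blast
        have "btw dX x q y" using b dist[OF x(1) q(1)] dist[OF q(1) y(1)] dist[OF x(1) y(1)] x y q unfolding btw_def by simp
        then show "w \<in> f ` {q\<in>X. btw dX x q y}" using q by blast
      qed
    qed
    finally show "B = {w\<in>f ` X. btw dY u w v}" .
  qed
  show ?thesis unfolding RF_def using em c t1 t2 by blast
qed

definition pcont :: "('a \<Rightarrow> 'a \<Rightarrow> ennreal) \<Rightarrow> (real \<Rightarrow> 'a) \<Rightarrow> bool" where
  "pcont d \<gamma> \<longleftrightarrow> (\<forall>t\<in>{0..1}. \<forall>e::real. e > 0 \<longrightarrow> (\<exists>\<delta>>0. \<forall>s\<in>{0..1}. \<bar>s - t\<bar> < \<delta> \<longrightarrow> d (\<gamma> s) (\<gamma> t) < ennreal e))"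

lemma is_arcE2:
  assumes "is_arc X d x y A"
  obtains \<gamma> :: "real \<Rightarrow> 'a" where "\<gamma> ` {0..1} = A" "A \<subseteq> X" "inj_on \<gamma> {0..1}" "\<gamma> 0 = x" "\<gamma> 1 = y" "pcont d \<gamma>"
  using is_arcE[OF assms] unfolding pcont_def by metis

lemma is_arcI2:
  fixes \<gamma> :: "real \<Rightarrow> 'a"
  assumes "\<gamma> ` {0..1} = A" "A \<subseteq> X" "inj_on \<gamma> {0..1}" "\<gamma> 0 = x" "\<gamma> 1 = y" "pcont d \<gamma>"
  shows "is_arc X d x y A"
  using is_arcI[OF assms(1-5)] assms(6) unfolding pcont_def by blast

lemma pcont_rev:
  assumes "pcont d \<gamma>"
  shows "pcont d (\<lambda>s. \<gamma> (1 - s))"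
  unfolding pcont_def
proof (intro ballI allI impI)
  fix t :: real and e :: real assume t: "t \<in> {0..1}" and e: "e > 0"
  have "1 - t \<in> {0..1}" using t by auto
  then obtain \<delta> where \<delta>: "\<delta> > 0" "\<forall>s\<in>{0..1}. \<bar>s - (1 - t)\<bar> < \<delta> \<longrightarrow> d (\<gamma> s) (\<gamma> (1 - t)) < ennreal e"
    using assms e unfolding pcont_def by blast
  show "\<exists>\<delta>>0. \<forall>s\<in>{0..1}. \<bar>s - t\<bar> < \<delta> \<longrightarrow> d (\<gamma> (1 - s)) (\<gamma> (1 - t)) < ennreal e"
  proof (intro exI[of _ \<delta>] conjI ballI impI)
    fix s :: real assume s: "s \<in> {0..1}" and st: "\<bar>s - t\<bar> < \<delta>"
    have "1 - s \<in> {0..1}" "\<bar>(1 - s) - (1 - t)\<bar> < \<delta>" using s st by auto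
    then show "d (\<gamma> (1 - s)) (\<gamma> (1 - t)) < ennreal e" using \<delta>(2) by blast
  qed (use \<delta> in simp)
qed

lemma arc_rev:
  assumes "is_arc X d x y A"
  shows "is_arc X d y x A"
proof -
  obtain \<gamma> :: "real \<Rightarrow> 'a" where g: "\<gamma> ` {0..1} = A" "A \<subseteq> X" "inj_on \<gamma> {0..1}" "\<gamma> 0 = x" "\<gamma> 1 = y" "pcont d \<gamma>"
    using is_arcE2[OF assms] by blast
  have im: "(\<lambda>s. 1 - s) ` {0..1::real} = {0..1}"
  proof
    show "(\<lambda>s. 1 - s) ` {0..1::real} \<subseteq> {0..1}" by auto
    show "{0..1} \<subseteq> (\<lambda>s. 1 - s) ` {0..1::real}"
    proof
      fix u :: real assume "u \<in> {0..1}" then have "u = 1 - (1 - u)" "1 - u \<in> {0..1}" by auto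
      then show "u \<in> (\<lambda>s. 1 - s) ` {0..1}" by blast
    qed
  qed
  show ?thesis
  proof (rule is_arcI2[of "\<lambda>s. \<gamma> (1 - s)"])
    have "(\<lambda>s. \<gamma> (1 - s)) ` {0..1} = \<gamma> ` ((\<lambda>s. 1 - s) ` {0..1})" by (simp only: image_image)
    then show "(\<lambda>s. \<gamma> (1 - s)) ` {0..1} = A" using im g(1) by simp
    show "A \<subseteq> X" using g(2) .
    show "inj_on (\<lambda>s. \<gamma> (1 - s)) {0..1}"
    proof (rule inj_onI)
      fix s t :: real assume "s \<in> {0..1}" "t \<in> {0..1}" "\<gamma> (1 - s) = \<gamma> (1 - t)"
      moreover have "1 - s \<in> {0..1}" "1 - t \<in> {0..1}" using calculation by auto
      ultimately have "1 - s = 1 - t" using g(3) by (auto dest: inj_onD)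
      then show "s = t" by simp
    qed
    show "\<gamma> (1 - 0) = y" "\<gamma> (1 - 1) = x" using g by auto
    show "pcont d (\<lambda>s. \<gamma> (1 - s))" using pcont_rev[OF g(6)] .
  qed
qed

lemma arc_sub_param:
  fixes \<gamma> :: "real \<Rightarrow> 'a"
  assumes pc: "pcont d \<gamma>" and inj: "inj_on \<gamma> {0..1}" and X: "\<gamma> ` {0..1} \<subseteq> X"
    and ab: "0 \<le> a" "a < b" "b \<le> 1"
  shows "is_arc X d (\<gamma> a) (\<gamma> b) (\<gamma> ` {a..b})"
proof -
  define h where "h = (\<lambda>t::real. a + (b - a) * t)"
  have hI: "h t \<in> {a..b}" if "t \<in> {0..1}" for t
  proof -
    have "(b - a) * t \<ge> 0" "(b - a) * t \<le> (b - a)" using that ab by (auto intro: mult_left_le)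
    then show ?thesis by (simp add: h_def)
  qed
  have sub: "{a..b} \<subseteq> {0..1}" using ab by auto
  have im: "h ` {0..1} = {a..b}"
  proof
    show "h ` {0..1} \<subseteq> {a..b}" using hI by blast
    show "{a..b} \<subseteq> h ` {0..1}"
    proof
      fix u assume u: "u \<in> {a..b}"
      have "u = h ((u - a) / (b - a))" using ab by (simp add: h_def)
      moreover have "(u - a) / (b - a) \<in> {0..1}" using u ab by (auto simp: field_simps)
      ultimately show "u \<in> h ` {0..1}" by blast
    qed
  qed
  show ?thesis
  proof (rule is_arcI2[of "\<gamma> \<circ> h"])
    show "(\<gamma> \<circ> h) ` {0..1} = \<gamma> ` {a..b}" unfolding im[symmetric] by (rule image_comp[symmetric])
    show "\<gamma> ` {a..b} \<subseteq> X" using X sub by blast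
    show "inj_on (\<gamma> \<circ> h) {0..1}"
    proof (rule inj_onI)
      fix s t assume s: "s \<in> {0..1}" and t: "t \<in> {0..1}" and e: "(\<gamma> \<circ> h) s = (\<gamma> \<circ> h) t"
      have "h s \<in> {0..1}" "h t \<in> {0..1}" using hI[OF s] hI[OF t] sub by auto
      then have "h s = h t" using e inj by (auto dest: inj_onD)
      then show "s = t" using ab by (simp add: h_def)
    qed
    show "(\<gamma> \<circ> h) 0 = \<gamma> a" "(\<gamma> \<circ> h) 1 = \<gamma> b" by (simp_all add: h_def)
    show "pcont d (\<gamma> \<circ> h)"
      unfolding pcont_def
    proof (intro ballI allI impI)
      fix t :: real and e :: real assume t: "t \<in> {0..1}" and e: "e > 0"
      have ht: "h t \<in> {0..1}" using hI[OF t] sub by auto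
      obtain \<delta> where \<delta>: "\<delta> > 0" "\<forall>s\<in>{0..1}. \<bar>s - h t\<bar> < \<delta> \<longrightarrow> d (\<gamma> s) (\<gamma> (h t)) < ennreal e"
        using pc ht e unfolding pcont_def by blast
      show "\<exists>\<delta>>0. \<forall>s\<in>{0..1}. \<bar>s - t\<bar> < \<delta> \<longrightarrow> d ((\<gamma> \<circ> h) s) ((\<gamma> \<circ> h) t) < ennreal e"
      proof (intro exI[of _ "\<delta> / (b - a)"] conjI ballI impI)
        show "\<delta> / (b - a) > 0" using \<delta>(1) ab by simp
        fix s assume s: "s \<in> {0..1}" and st: "\<bar>s - t\<bar> < \<delta> / (b - a)"
        have "\<bar>h s - h t\<bar> = (b - a) * \<bar>s - t\<bar>" using ab by (simp add: h_def abs_mult right_diff_distrib[symmetric])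
        also have "\<dots> < \<delta>" using st ab by (simp add: field_simps)
        finally have "\<bar>h s - h t\<bar> < \<delta>" .
        moreover have "h s \<in> {0..1}" using hI[OF s] sub by auto
        ultimately show "d ((\<gamma> \<circ> h) s) ((\<gamma> \<circ> h) t) < ennreal e" using \<delta>(2) by simp
      qed
    qed
  qed
qed

lemma enn_cancel_left:
  assumes "(a::ennreal) + b = a + c" "a < \<infinity>"
  shows "b = c"
  using assms ennreal_add_left_cancel by (auto simp: less_top[symmetric])

lemma enn_cancel_left_le:
  assumes "(a::ennreal) + b \<le> a + c" "a < \<infinity>"
  shows "b \<le> c"
  using assms ennreal_add_left_cancel_le by (auto simp: less_top[symmetric])

locale glue =
  fixes D :: "'a set" and d :: "'a \<Rightarrow> 'a \<Rightarrow> ennreal" and P Q :: "'a set"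
  assumes DPQ: "D = P \<union> Q"
    and RP: "RF P d" and RQ: "RF Q d"
    and symD: "\<And>x y. x \<in> D \<Longrightarrow> y \<in> D \<Longrightarrow> d x y = d y x"
    and clP: "closedS P d (P \<inter> Q)" and clQ: "closedS Q d (P \<inter> Q)"
    and cvP: "convexS P d (P \<inter> Q)" and cvQ: "convexS Q d (P \<inter> Q)"
    and infD: "\<And>x y. x \<in> P \<Longrightarrow> y \<in> Q \<Longrightarrow> d x y = (INF s\<in>P \<inter> Q. d x s + d s y)"
begin

lemma swap: "glue D d Q P"
proof
  show "D = Q \<union> P" using DPQ by blast
  show "RF Q d" using RQ .
  show "RF P d" using RP .
  show "\<And>x y. x \<in> D \<Longrightarrow> y \<in> D \<Longrightarrow> d x y = d y x" using symD .
  show "closedS Q d (Q \<inter> P)" "closedS P d (Q \<inter> P)" using clP clQ by (simp_all add: Int_commute)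
  show "convexS Q d (Q \<inter> P)" "convexS P d (Q \<inter> P)" using cvP cvQ by (simp_all add: Int_commute)
  fix x y assume x: "x \<in> Q" and y: "y \<in> P"
  have "d x y = d y x" using symD x y DPQ by blast
  also have "\<dots> = (INF s\<in>P \<inter> Q. d y s + d s x)" using infD[OF y x] .
  also have "\<dots> = (INF s\<in>Q \<inter> P. d x s + d s y)"
  proof (rule INF_cong)
    show "P \<inter> Q = Q \<inter> P" by blast
    fix s assume s: "s \<in> Q \<inter> P"
    have "d y s = d s y" "d s x = d x s" using symD s x y DPQ by blast+
    then show "d y s + d s x = d x s + d s y" by (simp add: add.commute)
  qed
  finally show "d x y = (INF s\<in>Q \<inter> P. d x s + d s y)" .
qed

lemma emP: "ext_metric P d" using RP by (rule RF_em)
lemma emQ: "ext_metric Q d" using RQ by (rule RF_em)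
lemma PD: "P \<subseteq> D" and QD: "Q \<subseteq> D" using DPQ by auto

lemma gate_ex:
  assumes x: "x \<in> P" and y: "y \<in> Q" and f: "d x y < \<infinity>"
  shows "\<exists>p. gate d (P \<inter> Q) y p"
proof -
  have "(INF s\<in>P \<inter> Q. d x s + d s y) < \<infinity>" using f infD[OF x y] by simp
  then have "\<exists>s\<in>P \<inter> Q. d x s + d s y < \<infinity>" unfolding INF_less_iff .
  then obtain s where s: "s \<in> P \<inter> Q" "d x s + d s y < \<infinity>" by blast
  have f2: "d s y < \<infinity>" using s(2) by simp
  show ?thesis using gate_exists[OF RQ clQ cvQ y s(1) f2] .
qed

lemma gateD:
  assumes "gate d (P \<inter> Q) y p"
  shows "p \<in> P" "p \<in> Q" "\<And>s. s \<in> P \<inter> Q \<Longrightarrow> d s y = d s p + d p y"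
proof -
  have h: "p \<in> P \<inter> Q" "\<forall>s\<in>P \<inter> Q. d s y = d s p + d p y" using assms unfolding gate_def by blast+
  then show "p \<in> P" "p \<in> Q" by blast+
  fix s assume "s \<in> P \<inter> Q" then show "d s y = d s p + d p y" using h(2) by blast
qed

lemma gate_formula:
  assumes x: "x \<in> P" and y: "y \<in> Q" and g: "gate d (P \<inter> Q) y p"
  shows "d x y = d x p + d p y"
proof -
  have pP: "p \<in> P" and pQ: "p \<in> Q" using gateD[OF g] by auto
  have "d x y = (INF s\<in>P \<inter> Q. d x s + d s y)" using infD[OF x y] .
  also have "\<dots> = d x p + d p y"
  proof (rule antisym)
    show "(INF s\<in>P \<inter> Q. d x s + d s y) \<le> d x p + d p y"
      using INF_lower[of p "P \<inter> Q" "\<lambda>s. d x s + d s y"] pP pQ by simp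
    show "d x p + d p y \<le> (INF s\<in>P \<inter> Q. d x s + d s y)"
    proof (rule INF_greatest)
      fix s assume s: "s \<in> P \<inter> Q"
      have "d x p \<le> d x s + d s p" using em_tri[OF emP x _ pP] s by blast
      then have "d x p + d p y \<le> d x s + d s p + d p y" by (rule add_right_mono)
      also have "\<dots> = d x s + d s y" using gateD(3)[OF g s] by (simp add: add.assoc)
      finally show "d x p + d p y \<le> d x s + d s y" .
    qed
  qed
  finally show ?thesis .
qed

lemma gate_le:
  assumes x: "x \<in> P" and y: "y \<in> Q" and g: "gate d (P \<inter> Q) y p"
  shows "d p y \<le> d x y"
  using gate_formula[OF assms] by (simp add: add_increasing)

lemma gate_fin:
  assumes x: "x \<in> P" and y: "y \<in> Q" and g: "gate d (P \<inter> Q) y p" and f: "d x y < \<infinity>"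
  shows "d x p < \<infinity>" "d p y < \<infinity>"
proof -
  have "d x p + d p y < \<infinity>" using gate_formula[OF x y g] f by simp
  then show "d x p < \<infinity>" "d p y < \<infinity>" by simp_all
qed

lemma P_closed:
  assumes z: "z \<in> D" and H: "\<forall>e::real. e > 0 \<longrightarrow> (\<exists>x\<in>P. d x z < ennreal e)"
  shows "z \<in> P"
proof (rule ccontr)
  assume zP: "z \<notin> P"
  then have zQ: "z \<in> Q" using z DPQ by blast
  obtain x where x: "x \<in> P" "d x z < ennreal 1" using H by (meson zero_less_one)
  have "d x z < \<infinity>" using order.strict_trans[OF x(2) ennreal_less_top] by simp
  then obtain p where g: "gate d (P \<inter> Q) z p" using gate_ex[OF x(1) zQ] by blast
  have "d p z = 0"
  proof (rule enn_eps_zero, intro allI impI)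
    fix e :: real assume "e > 0"
    then obtain x' where x': "x' \<in> P" "d x' z < ennreal e" using H by blast
    show "d p z < ennreal e" using gate_le[OF x'(1) zQ g] x'(2) by (rule le_less_trans)
  qed
  then have "p = z" using em_eq[OF emQ gateD(2)[OF g] zQ] by simp
  then show False using gateD(1)[OF g] zP by simp
qed

lemma gate_seg:
  assumes y: "y \<in> Q" and g: "gate d (P \<inter> Q) y p" and z: "z \<in> Q" and b: "btw d p z y"
  shows "gate d (P \<inter> Q) z p"
  unfolding gate_def
proof (intro conjI ballI)
  show "p \<in> P \<inter> Q" using gateD[OF g] by blast
  have pQ: "p \<in> Q" using gateD[OF g] by blast
  fix s assume s: "s \<in> P \<inter> Q"
  then have sQ: "s \<in> Q" by blast
  have fzy: "d z y < \<infinity>" using btw_fin(2)[OF b] .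
  show "d s z = d s p + d p z"
  proof (rule antisym)
    show "d s z \<le> d s p + d p z" using em_tri[OF emQ sQ pQ z] .
    have "d s p + d p z + d z y = d s p + d p y" using b by (simp add: btw_def add.assoc)
    also have "\<dots> = d s y" using gateD(3)[OF g s] by simp
    also have "\<dots> \<le> d s z + d z y" using em_tri[OF emQ sQ z y] .
    finally have "d z y + (d s p + d p z) \<le> d z y + d s z" by (simp add: add.commute)
    then show "d s p + d p z \<le> d s z" using enn_cancel_left_le fzy by blast
  qed
qed

lemma btw_PP:
  assumes x: "x \<in> P" and y: "y \<in> P" and q: "q \<in> D" and b: "btw d x q y"
  shows "q \<in> P"
proof (rule ccontr)
  assume qP: "q \<notin> P"
  then have qQ: "q \<in> Q" using q DPQ by blast
  have f: "d x q < \<infinity>" "d q y < \<infinity>" "d x y < \<infinity>" using btw_fin[OF b] by auto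
  obtain g where g: "gate d (P \<inter> Q) q g" using gate_ex[OF x qQ f(1)] by blast
  have gP: "g \<in> P" using gateD[OF g] by blast
  have e1: "d x q = d x g + d g q" using gate_formula[OF x qQ g] .
  have "d y q = d q y" using symD y q PD by blast
  moreover have "d y g = d g y" using symD gP y PD by blast
  ultimately have e2: "d q y = d g q + d g y" using gate_formula[OF y qQ g] by (simp add: add.commute)
  have "d x g + d g q + (d g q + d g y) = d x y" using b e1 e2 by (simp add: btw_def)
  moreover have "d x y \<le> d x g + d g y" using em_tri[OF emP x gP y] .
  ultimately have "d g q = 0" using cancel_mid f(3) by blast
  then have "g = q" using em_eq[OF emQ gateD(2)[OF g] qQ] by simp
  then show False using gP qP by simp
qed

end

lemma geod_mono: "geod X d x y \<phi> \<Longrightarrow> X \<subseteq> Y \<Longrightarrow> geod Y d x y \<phi>"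
  unfolding geod_def by blast

context glue begin

lemma tri_PPQ:
  assumes x: "x \<in> P" and y: "y \<in> P" and z: "z \<in> Q"
  shows "d x z \<le> d x y + d y z"
proof (cases "d y z < \<infinity>")
  case False then show ?thesis by (simp add: less_top[symmetric])
next
  case True
  obtain p where g: "gate d (P \<inter> Q) z p" using gate_ex[OF y z True] by blast
  have pP: "p \<in> P" using gateD[OF g] by blast
  have "d x z = d x p + d p z" using gate_formula[OF x z g] .
  also have "\<dots> \<le> d x y + d y p + d p z" using em_tri[OF emP x y pP] by (rule add_right_mono)
  also have "\<dots> = d x y + d y z" using gate_formula[OF y z g] by (simp add: add.assoc)
  finally show ?thesis .
qed

lemma tri_PQP:
  assumes x: "x \<in> P" and y: "y \<in> Q" and z: "z \<in> P"
  shows "d x z \<le> d x y + d y z"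
proof (cases "d x y < \<infinity>")
  case False then show ?thesis by (simp add: less_top[symmetric])
next
  case True
  obtain p where g: "gate d (P \<inter> Q) y p" using gate_ex[OF x y True] by blast
  have pP: "p \<in> P" using gateD[OF g] by blast
  have "d x z \<le> d x p + d p z" using em_tri[OF emP x pP z] .
  also have "d x p \<le> d x y" using gate_formula[OF x y g] by (simp add: add_increasing2)
  also have "d p z \<le> d y z"
  proof -
    have "d p z = d z p" using symD pP z PD by blast
    also have "\<dots> \<le> d z y" using gate_formula[OF z y g] by (simp add: add_increasing2)
    also have "\<dots> = d y z" using symD y z PD QD by blast
    finally show ?thesis .
  qed
  finally show ?thesis by (simp add: add_mono)
qed

lemma tri_QPP:
  assumes x: "x \<in> Q" and y: "y \<in> P" and z: "z \<in> P"
  shows "d x z \<le> d x y + d y z"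
proof -
  have "d x z = d z x" using symD x z PD QD by blast
  also have "\<dots> \<le> d z y + d y x" using tri_PPQ[OF z y x] .
  also have "\<dots> = d x y + d y z" using symD x y z PD QD by (simp add: add.commute subset_iff)
  finally show ?thesis .
qed

lemma tri_P2:
  assumes "x \<in> P \<and> y \<in> P \<and> z \<in> P \<or> x \<in> P \<and> y \<in> P \<and> z \<in> Q \<or> x \<in> P \<and> y \<in> Q \<and> z \<in> P \<or> x \<in> Q \<and> y \<in> P \<and> z \<in> P"
  shows "d x z \<le> d x y + d y z"
  using assms em_tri[OF emP] tri_PPQ tri_PQP tri_QPP by blast

lemma zero_PQ:
  assumes x: "x \<in> P" and y: "y \<in> Q" and z: "d x y = 0"
  shows "x = y"
proof -
  obtain p where g: "gate d (P \<inter> Q) y p" using gate_ex[OF x y] z by auto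
  have "d p y = 0" using gate_le[OF x y g] z by simp
  then have "p = y" using em_eq[OF emQ gateD(2)[OF g] y] by simp
  then have yP: "y \<in> P" using gateD(1)[OF g] by simp
  then show ?thesis using em_eq[OF emP x yP] z by simp
qed

end

lemma (in glue) em_D: "ext_metric D d"
  unfolding ext_metric_def
proof (intro conjI ballI)
  interpret S: glue D d Q P by (rule swap)
  fix x y assume x: "x \<in> D" and y: "y \<in> D"
  show "d x y = d y x" using symD[OF x y] .
  show "d x y = 0 \<longleftrightarrow> x = y"
  proof
    assume z: "d x y = 0"
    have "x \<in> P \<and> y \<in> P \<or> x \<in> Q \<and> y \<in> Q \<or> x \<in> P \<and> y \<in> Q \<or> x \<in> Q \<and> y \<in> P" using x y DPQ by blast
    moreover have "d y x = 0" using z symD[OF x y] by simp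
    ultimately show "x = y" using em_eq[OF emP] em_eq[OF emQ] zero_PQ S.zero_PQ z by metis
  next
    assume "x = y"
    then show "d x y = 0" using x DPQ em_zero[OF emP] em_zero[OF emQ] by blast
  qed
  fix z assume z: "z \<in> D"
  have "(x \<in> P \<and> y \<in> P \<and> z \<in> P \<or> x \<in> P \<and> y \<in> P \<and> z \<in> Q \<or> x \<in> P \<and> y \<in> Q \<and> z \<in> P \<or> x \<in> Q \<and> y \<in> P \<and> z \<in> P)
    \<or> (x \<in> Q \<and> y \<in> Q \<and> z \<in> Q \<or> x \<in> Q \<and> y \<in> Q \<and> z \<in> P \<or> x \<in> Q \<and> y \<in> P \<and> z \<in> Q \<or> x \<in> P \<and> y \<in> Q \<and> z \<in> Q)"
    using x y z DPQ by blast
  then show "d x z \<le> d x y + d y z" using tri_P2 S.tri_P2 by blast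
qed

context glue begin

lemma geod_PQ:
  assumes x: "x \<in> P" and y: "y \<in> Q" and f: "d x y < \<infinity>"
  shows "\<exists>\<psi>. geod D d x y \<psi>"
proof -
  obtain p where g: "gate d (P \<inter> Q) y p" using gate_ex[OF x y f] by blast
  have pP: "p \<in> P" and pQ: "p \<in> Q" using gateD[OF g] by auto
  have fp: "d x p < \<infinity>" "d p y < \<infinity>" using gate_fin[OF x y g f] by auto
  obtain \<phi>1 where g1: "geod P d x p \<phi>1" using RF_T1D[OF RP x pP fp(1)] by blast
  obtain \<phi>2 where g2: "geod Q d p y \<phi>2" using RF_T1D[OF RQ pQ y fp(2)] by blast
  define L1 where "L1 = enn2real (d x p)"
  define L2 where "L2 = enn2real (d p y)"
  have L1: "L1 \<ge> 0" and L2: "L2 \<ge> 0" by (simp_all add: L1_def L2_def)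
  have e1: "d x p = ennreal L1" using fp(1) by (simp add: L1_def less_top)
  have e2: "d p y = ennreal L2" using fp(2) by (simp add: L2_def less_top)
  have dxy: "d x y = ennreal (L1 + L2)" using gate_formula[OF x y g] e1 e2 L1 L2 by (simp flip: ennreal_plus)
  have L: "enn2real (d x y) = L1 + L2" using dxy L1 L2 by (simp del: ennreal_plus)
  define \<psi> where "\<psi> = (\<lambda>t. if t \<le> L1 then \<phi>1 t else \<phi>2 (t - L1))"
  have p1: "\<phi>1 0 = x" "\<phi>1 L1 = p" "\<And>t. t \<in> {0..L1} \<Longrightarrow> \<phi>1 t \<in> P"
    "\<And>s t. s \<in> {0..L1} \<Longrightarrow> t \<in> {0..L1} \<Longrightarrow> d (\<phi>1 s) (\<phi>1 t) = ennreal \<bar>s - t\<bar>"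
    using geodD[OF g1] by (auto simp: L1_def)
  have p2: "\<phi>2 0 = p" "\<phi>2 L2 = y" "\<And>t. t \<in> {0..L2} \<Longrightarrow> \<phi>2 t \<in> Q"
    "\<And>s t. s \<in> {0..L2} \<Longrightarrow> t \<in> {0..L2} \<Longrightarrow> d (\<phi>2 s) (\<phi>2 t) = ennreal \<bar>s - t\<bar>"
    using geodD[OF g2] by (auto simp: L2_def)
  have cross: "d (\<phi>1 s) (\<phi>2 u) = ennreal (L1 - s + u)" if s: "s \<in> {0..L1}" and u: "u \<in> {0..L2}" for s u
  proof -
    have b: "btw d p (\<phi>2 u) y" using geod_btw[OF g2] u by (simp add: L2_def)
    have gu: "gate d (P \<inter> Q) (\<phi>2 u) p" using gate_seg[OF y g p2(3)[OF u] b] .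
    have "d (\<phi>1 s) (\<phi>2 u) = d (\<phi>1 s) p + d p (\<phi>2 u)" using gate_formula[OF p1(3)[OF s] p2(3)[OF u] gu] .
    also have "d (\<phi>1 s) p = ennreal (L1 - s)" using p1(4)[OF s, of L1] p1(2) s L1 by simp
    also have "d p (\<phi>2 u) = ennreal u" using p2(4)[of 0 u] p2(1) u L2 by simp
    also have "ennreal (L1 - s) + ennreal u = ennreal (L1 - s + u)" using s u by (simp flip: ennreal_plus)
    finally show ?thesis .
  qed
  have "geod D d x y \<psi>"
    unfolding geod_def L
  proof (intro conjI ballI)
    show "d x y < \<infinity>" using f .
    show "\<psi> 0 = x" using p1(1) L1 by (simp add: \<psi>_def)
    show "\<psi> (L1 + L2) = y"
    proof (cases "L2 = 0")
      case True
      then have "d p y = 0" using e2 by simp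
      then have "p = y" using em_eq[OF emQ pQ y] by simp
      then show ?thesis using True p1(2) by (simp add: \<psi>_def)
    next
      case False then show ?thesis using p2(2) L2 by (simp add: \<psi>_def)
    qed
    fix t assume t: "t \<in> {0..L1 + L2}"
    show "\<psi> t \<in> D" using p1(3) p2(3) t PD QD by (auto simp: \<psi>_def)
    fix s assume s: "s \<in> {0..L1 + L2}"
    consider "t \<le> L1" "s \<le> L1" | "t \<le> L1" "\<not> s \<le> L1" | "\<not> t \<le> L1" "s \<le> L1" | "\<not> t \<le> L1" "\<not> s \<le> L1" by blast
    then show "d (\<psi> t) (\<psi> s) = ennreal \<bar>t - s\<bar>"
    proof cases
      case 1 then show ?thesis using p1(4) s t by (simp add: \<psi>_def)
    next
      case 2
      have "d (\<psi> t) (\<psi> s) = ennreal (L1 - t + (s - L1))" using 2 cross[of t "s - L1"] s t by (simp add: \<psi>_def)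
      then show ?thesis using 2 by simp
    next
      case 3
      have tI: "t - L1 \<in> {0..L2}" "s \<in> {0..L1}" using 3 s t by auto
      have "d (\<psi> t) (\<psi> s) = d (\<phi>2 (t - L1)) (\<phi>1 s)" using 3 by (simp add: \<psi>_def)
      also have "\<dots> = d (\<phi>1 s) (\<phi>2 (t - L1))" using symD p1(3)[OF tI(2)] p2(3)[OF tI(1)] PD QD by blast
      also have "\<dots> = ennreal (L1 - s + (t - L1))" using cross[OF tI(2) tI(1)] .
      finally show ?thesis using 3 by simp
    next
      case 4 then show ?thesis using p2(4)[of "t - L1" "s - L1"] s t by (simp add: \<psi>_def)
    qed
  qed
  then show ?thesis by blast
qed

end

lemma (in glue) T1_D: "T1 D d"
  unfolding T1_def
proof (intro ballI impI)
  interpret S: glue D d Q P by (rule swap)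
  fix x y assume x: "x \<in> D" and y: "y \<in> D" and f: "d x y < \<infinity>"
  consider "x \<in> P" "y \<in> P" | "x \<in> Q" "y \<in> Q" | "x \<in> P" "y \<in> Q" | "x \<in> Q" "y \<in> P" using x y DPQ by blast
  then show "\<exists>\<phi>. geod D d x y \<phi>"
  proof cases
    case 1
    then obtain \<phi> where "geod P d x y \<phi>" using RF_T1D[OF RP _ _ f] by blast
    then show ?thesis using geod_mono[OF _ PD] by blast
  next
    case 2
    then obtain \<phi> where "geod Q d x y \<phi>" using RF_T1D[OF RQ _ _ f] by blast
    then show ?thesis using geod_mono[OF _ QD] by blast
  next
    case 3 then show ?thesis using geod_PQ[OF _ _ f] by blast
  next
    case 4 then show ?thesis using S.geod_PQ[OF _ _ f] by blast
  qed
qed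

context glue begin

lemma last_P:
  fixes \<gamma> :: "real \<Rightarrow> 'a"
  assumes pc: "pcont d \<gamma>" and inD: "\<And>u. u \<in> {0..1} \<Longrightarrow> \<gamma> u \<in> D" and g0: "\<gamma> 0 \<in> P"
    and t: "t \<in> {0..1}" and gt: "\<gamma> t \<notin> P"
  shows "\<exists>a. 0 \<le> a \<and> a < t \<and> \<gamma> a \<in> P \<and> \<gamma> a \<in> Q \<and> (\<forall>u. a < u \<and> u \<le> t \<longrightarrow> \<gamma> u \<in> Q \<and> \<gamma> u \<notin> P)"
proof -
  interpret S: glue D d Q P by (rule swap)
  define SS where "SS = {u\<in>{0..t}. \<gamma> u \<in> P}"
  have t0: "0 \<le> t" "t \<le> 1" using t by auto
  have ne: "SS \<noteq> {}" and zS: "0 \<in> SS" using g0 t0 by (auto simp: SS_def)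
  have bdd: "bdd_above SS" unfolding bdd_above_def SS_def by auto
  define a where "a = Sup SS"
  have upper: "\<And>u. u \<in> SS \<Longrightarrow> u \<le> a" unfolding a_def using bdd by (simp add: cSup_upper)
  have a0: "0 \<le> a" using upper[OF zS] .
  have at: "a \<le> t" unfolding a_def using ne by (rule cSup_least) (simp add: SS_def)
  have aI: "a \<in> {0..1}" using a0 at t0 by simp
  have aP: "\<gamma> a \<in> P"
  proof (rule P_closed[OF inD[OF aI]], intro allI impI)
    fix e :: real assume e: "e > 0"
    obtain \<delta> where \<delta>: "\<delta> > 0" "\<forall>s\<in>{0..1}. \<bar>s - a\<bar> < \<delta> \<longrightarrow> d (\<gamma> s) (\<gamma> a) < ennreal e"
      using pc aI e unfolding pcont_def by blast
    have "a - \<delta> < Sup SS" using \<delta>(1) by (simp add: a_def)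
    then obtain u where u: "u \<in> SS" "a - \<delta> < u" using less_cSup_iff[OF ne bdd] by blast
    have "u \<le> a" using upper[OF u(1)] .
    then have "\<bar>u - a\<bar> < \<delta>" "u \<in> {0..1}" using u t0 by (auto simp: SS_def)
    then have "d (\<gamma> u) (\<gamma> a) < ennreal e" using \<delta>(2) by blast
    moreover have "\<gamma> u \<in> P" using u(1) by (simp add: SS_def)
    ultimately show "\<exists>x\<in>P. d x (\<gamma> a) < ennreal e" by blast
  qed
  have alt: "a < t" using at aP gt by (cases "a = t") auto
  have after: "\<gamma> u \<in> Q \<and> \<gamma> u \<notin> P" if "a < u" "u \<le> t" for u
  proof -
    have "\<gamma> u \<notin> P"
    proof
      assume "\<gamma> u \<in> P"
      then have "u \<in> SS" using that a0 by (simp add: SS_def)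
      then show False using upper that(1) by fastforce
    qed
    moreover have "u \<in> {0..1}" using that a0 t0 by simp
    ultimately show ?thesis using inD DPQ by blast
  qed
  have aQ: "\<gamma> a \<in> Q"
  proof (rule S.P_closed[OF inD[OF aI]], intro allI impI)
    fix e :: real assume e: "e > 0"
    obtain \<delta> where \<delta>: "\<delta> > 0" "\<forall>s\<in>{0..1}. \<bar>s - a\<bar> < \<delta> \<longrightarrow> d (\<gamma> s) (\<gamma> a) < ennreal e"
      using pc aI e unfolding pcont_def by blast
    define u where "u = min t (a + \<delta> / 2)"
    have u: "a < u" "u \<le> t" "\<bar>u - a\<bar> < \<delta>" "u \<in> {0..1}" using alt \<delta>(1) a0 t0 by (auto simp: u_def)
    then have "d (\<gamma> u) (\<gamma> a) < ennreal e" using \<delta>(2) by blast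
    moreover have "\<gamma> u \<in> Q" using after[OF u(1,2)] by blast
    ultimately show "\<exists>x\<in>Q. d x (\<gamma> a) < ennreal e" by blast
  qed
  show ?thesis using a0 alt aP aQ after by blast
qed

lemma T2_PP:
  assumes x: "x \<in> P" and y: "y \<in> P" and xy: "x \<noteq> y" and A: "is_arc D d x y A"
  shows "A = {q\<in>D. btw d x q y}"
proof -
  obtain \<gamma> :: "real \<Rightarrow> 'a" where g: "\<gamma> ` {0..1} = A" "A \<subseteq> D" "inj_on \<gamma> {0..1}" "\<gamma> 0 = x" "\<gamma> 1 = y" "pcont d \<gamma>"
    using is_arcE2[OF A] by blast
  have inD: "\<And>u. u \<in> {0..1} \<Longrightarrow> \<gamma> u \<in> D" using g(1,2) by blast
  have AP: "A \<subseteq> P"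
  proof
    fix q assume "q \<in> A"
    then obtain t where t: "t \<in> {0..1}" "q = \<gamma> t" using g(1) by blast
    show "q \<in> P"
    proof (rule ccontr)
      assume qP: "q \<notin> P"
      obtain a where a: "0 \<le> a" "a < t" "\<gamma> a \<in> P" "\<gamma> a \<in> Q" "\<forall>u. a < u \<and> u \<le> t \<longrightarrow> \<gamma> u \<in> Q \<and> \<gamma> u \<notin> P"
        using last_P[OF g(6) inD _ t(1)] g(4) x qP t(2) by blast
      define \<gamma>' where "\<gamma>' = (\<lambda>s. \<gamma> (1 - s))"
      have inD': "\<And>u. u \<in> {0..1} \<Longrightarrow> \<gamma>' u \<in> D" using inD by (simp add: \<gamma>'_def)
      have t': "1 - t \<in> {0..1}" using t by auto
      have pc': "pcont d \<gamma>'" using pcont_rev[OF g(6)] by (simp add: \<gamma>'_def)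
      have "\<gamma>' (1 - t) \<notin> P" using qP t(2) by (simp add: \<gamma>'_def)
      moreover have "\<gamma>' 0 \<in> P" using g(5) y by (simp add: \<gamma>'_def)
      ultimately obtain a' where a': "0 \<le> a'" "a' < 1 - t" "\<gamma>' a' \<in> P" "\<gamma>' a' \<in> Q"
        "\<forall>u. a' < u \<and> u \<le> 1 - t \<longrightarrow> \<gamma>' u \<in> Q \<and> \<gamma>' u \<notin> P"
        using last_P[OF pc' inD' _ t'] by blast
      define b where "b = 1 - a'"
      have b: "t < b" "b \<le> 1" "\<gamma> b \<in> Q" using a' by (auto simp: b_def \<gamma>'_def)
      have allQ: "\<gamma> ` {a..b} \<subseteq> Q"
      proof
        fix w assume "w \<in> \<gamma> ` {a..b}"
        then obtain v where v: "v \<in> {a..b}" "w = \<gamma> v" by blast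
        consider "v = a" | "a < v" "v \<le> t" | "t \<le> v" "v < b" | "v = b" using v(1) by fastforce
        then show "w \<in> Q"
        proof cases
          case 1 then show ?thesis using a(4) v(2) by simp
        next
          case 2 then show ?thesis using a(5) v(2) by blast
        next
          case 3
          then have "a' < 1 - v" "1 - v \<le> 1 - t" by (auto simp: b_def)
          then have "\<gamma>' (1 - v) \<in> Q" using a'(5) by blast
          then show ?thesis using v(2) by (simp add: \<gamma>'_def)
        next
          case 4 then show ?thesis using b(3) v(2) by simp
        qed
      qed
      have ab: "0 \<le> a" "a < b" "b \<le> 1" using a(1,2) b(1,2) by auto
      have "\<gamma> ` {0..1} \<subseteq> D" using g(1,2) by simp
      then have arcD: "is_arc D d (\<gamma> a) (\<gamma> b) (\<gamma> ` {a..b})" using arc_sub_param[OF g(6) g(3) _ ab] by blast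
      have arcQ: "is_arc Q d (\<gamma> a) (\<gamma> b) (\<gamma> ` {a..b})" using arc_sub[OF arcD allQ] .
      have aI: "a \<in> {0..1}" "b \<in> {0..1}" using ab by auto
      have neq: "\<gamma> a \<noteq> \<gamma> b" using g(3) aI ab(2) by (auto dest: inj_onD)
      have eq: "\<gamma> ` {a..b} = {w\<in>Q. btw d (\<gamma> a) w (\<gamma> b)}"
        using RF_T2D[OF RQ a(4) b(3) neq arcQ] .
      have "t \<in> {a..b}" using a(2) b(1) by simp
      then have "q \<in> \<gamma> ` {a..b}" using t(2) by blast
      then have "btw d (\<gamma> a) q (\<gamma> b)" "q \<in> Q" using eq by blast+
      moreover have "\<gamma> b \<in> P"
      proof -
        have "\<gamma>' a' \<in> P" using a'(3) .
        then show ?thesis by (simp add: \<gamma>'_def b_def)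
      qed
      ultimately have "q \<in> P \<inter> Q" using cvQ a(3,4) b(3) unfolding convexS_def by blast
      then show False using qP by blast
    qed
  qed
  have "is_arc P d x y A" using arc_sub[OF A AP] .
  then have "A = {q\<in>P. btw d x q y}" using RF_T2D[OF RP x y xy] by blast
  also have "\<dots> = {q\<in>D. btw d x q y}" using btw_PP[OF x y] PD by blast
  finally show ?thesis .
qed

lemma T2_PQ:
  assumes x: "x \<in> P" "x \<notin> Q" and y: "y \<in> Q" "y \<notin> P" and A: "is_arc D d x y A"
  shows "A = {q\<in>D. btw d x q y}"
proof -
  have emD: "ext_metric D d" by (rule em_D)
  obtain \<gamma> :: "real \<Rightarrow> 'a" where g: "\<gamma> ` {0..1} = A" "A \<subseteq> D" "inj_on \<gamma> {0..1}" "\<gamma> 0 = x" "\<gamma> 1 = y" "pcont d \<gamma>"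
    using is_arcE2[OF A] by blast
  have inD: "\<And>u. u \<in> {0..1} \<Longrightarrow> \<gamma> u \<in> D" using g(1,2) by blast
  have gD: "\<gamma> ` {0..1} \<subseteq> D" using g(1,2) by simp
  obtain a where a: "0 \<le> a" "a < 1" "\<gamma> a \<in> P" "\<gamma> a \<in> Q" "\<forall>u. a < u \<and> u \<le> 1 \<longrightarrow> \<gamma> u \<in> Q \<and> \<gamma> u \<notin> P"
  proof -
    have g0: "\<gamma> 0 \<in> P" using g(4) x(1) by simp
    have t1: "(1::real) \<in> {0..1}" by simp
    have gt1: "\<gamma> 1 \<notin> P" using g(5) y(2) by simp
    show ?thesis using last_P[OF g(6) inD g0 t1 gt1] that by blast
  qed
  define c where "c = \<gamma> a"
  have cP: "c \<in> P" and cQ: "c \<in> Q" using a by (auto simp: c_def)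
  have a_pos: "0 < a"
  proof (rule ccontr)
    assume "\<not> 0 < a" then have "a = 0" using a(1) by simp
    then show False using cQ x(2) g(4) by (simp add: c_def)
  qed
  have xc: "x \<noteq> c" using x(2) cQ by blast
  have cy: "c \<noteq> y" using y(2) cP by blast
  have arc1: "is_arc D d x c (\<gamma> ` {0..a})" using arc_sub_param[OF g(6) g(3) gD order.refl a_pos] a(2) g(4) by (simp add: c_def)
  have part1: "\<gamma> ` {0..a} = {q\<in>D. btw d x q c}" using T2_PP[OF x(1) cP xc arc1] .
  have arc2D: "is_arc D d c y (\<gamma> ` {a..1})" using arc_sub_param[OF g(6) g(3) gD a(1) a(2) order.refl] g(5) by (simp add: c_def)
  have sub2: "\<gamma> ` {a..1} \<subseteq> Q"
  proof
    fix w assume "w \<in> \<gamma> ` {a..1}"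
    then obtain v where v: "v \<in> {a..1}" "w = \<gamma> v" by blast
    show "w \<in> Q"
    proof (cases "v = a")
      case True then show ?thesis using cQ v(2) by (simp add: c_def)
    next
      case False then show ?thesis using a(5) v by auto
    qed
  qed
  have arc2: "is_arc Q d c y (\<gamma> ` {a..1})" using arc_sub[OF arc2D sub2] .
  have part2: "\<gamma> ` {a..1} = {q\<in>Q. btw d c q y}" using RF_T2D[OF RQ cQ y(1) cy arc2] .
  have "(1::real) \<in> {a..1}" using a(2) by simp
  then have "\<gamma> 1 \<in> \<gamma> ` {a..1}" by (rule imageI)
  then have "y \<in> \<gamma> ` {a..1}" using g(5) by simp
  then have "btw d c y y" using part2 by blast
  then have fcy: "d c y < \<infinity>" by (simp add: btw_def)
  obtain p where gp: "gate d (P \<inter> Q) y p" using gate_ex[OF cP y(1) fcy] by blast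
  have pP: "p \<in> P" and pQ: "p \<in> Q" using gateD[OF gp] by auto
  have "d c y = d c p + d p y" using gateD(3)[OF gp] cP cQ by blast
  then have "btw d c p y" using fcy by (simp add: btw_def)
  then have "p \<in> \<gamma> ` {a..1}" using part2 pQ by blast
  then obtain u where u: "u \<in> {a..1}" "p = \<gamma> u" by blast
  have "\<not> a < u" using a(5) u pP by auto
  then have "u = a" using u(1) by simp
  then have pc: "p = c" using u(2) by (simp add: c_def)
  have gc: "gate d (P \<inter> Q) y c" using gp pc by simp
  have dxy: "d x y = d x c + d c y" using gate_formula[OF x(1) y(1) gc] .
  have Aeq: "A = \<gamma> ` {0..a} \<union> \<gamma> ` {a..1}"
  proof -
    have e: "{0..1} = {0..a} \<union> {a..(1::real)}" using a(1,2) by auto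
    have "\<gamma> ` {0..1} = \<gamma> ` {0..a} \<union> \<gamma> ` {a..1}" unfolding e by (rule image_Un)
    then show ?thesis using g(1) by simp
  qed
  have "a \<in> {0..a}" using a(1) by simp
  then have "\<gamma> a \<in> \<gamma> ` {0..a}" by (rule imageI)
  then have "btw d x c c" using part1 by (simp add: c_def)
  then have fxc: "d x c < \<infinity>" by (simp add: btw_def)
  have xD: "x \<in> D" and yD: "y \<in> D" and cD: "c \<in> D" using x y cP PD QD by auto
  show ?thesis
  proof
    show "A \<subseteq> {q\<in>D. btw d x q y}"
    proof
      fix q assume "q \<in> A"
      then consider "q \<in> D" "btw d x q c" | "q \<in> Q" "btw d c q y" using Aeq part1 part2 by blast
      then show "q \<in> {q\<in>D. btw d x q y}"
      proof cases
        case 1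
        have "d x q + d q y \<le> d x q + (d q c + d c y)" using em_tri[OF emD 1(1) cD yD] by (rule add_left_mono)
        also have "\<dots> = d x c + d c y" using 1(2) by (simp add: btw_def add.assoc[symmetric])
        finally have le: "d x q + d q y \<le> d x y" using dxy by simp
        have "d x y \<le> d x q + d q y" using em_tri[OF emD xD 1(1) yD] .
        then have "d x q + d q y = d x y" using le by simp
        moreover have "d x y < \<infinity>" using dxy fxc fcy by simp
        ultimately show ?thesis using 1(1) by (simp add: btw_def)
      next
        case 2
        have qD: "q \<in> D" using 2(1) QD by blast
        have "d x q + d q y \<le> d x c + d c q + d q y" using em_tri[OF emD xD cD qD] by (rule add_right_mono)
        also have "\<dots> = d x c + d c y" using 2(2) by (simp add: btw_def add.assoc)
        finally have le: "d x q + d q y \<le> d x y" using dxy by simp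
        have "d x y \<le> d x q + d q y" using em_tri[OF emD xD qD yD] .
        then have "d x q + d q y = d x y" using le by simp
        moreover have "d x y < \<infinity>" using dxy fxc fcy by simp
        ultimately show ?thesis using qD by (simp add: btw_def)
      qed
    qed
    show "{q\<in>D. btw d x q y} \<subseteq> A"
    proof
      fix q assume "q \<in> {q\<in>D. btw d x q y}"
      then have qD: "q \<in> D" and b: "btw d x q y" by auto
      have fxq: "d x q < \<infinity>" and fqy: "d q y < \<infinity>" and fxy: "d x y < \<infinity>" using btw_fin[OF b] by auto
      have bq: "d x q + d q y = d x y" using b by (simp add: btw_def)
      show "q \<in> A"
      proof (cases "q \<in> P")
        case True
        have dqy: "d q y = d q c + d c y" using gate_formula[OF True y(1) gc] .
        have "d c y + (d x q + d q c) = d c y + d x c" using bq dqy dxy by (simp add: add_ac)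
        then have "d x q + d q c = d x c" using enn_cancel_left fcy by blast
        then have "btw d x q c" using fxc by (simp add: btw_def)
        then show ?thesis using part1 qD Aeq by blast
      next
        case False
        then have qQ: "q \<in> Q" using qD DPQ by blast
        obtain g' where gq: "gate d (P \<inter> Q) q g'" using gate_ex[OF x(1) qQ fxq] by blast
        have g'P: "g' \<in> P" and g'Q: "g' \<in> Q" using gateD[OF gq] by auto
        have e2: "d x q = d x g' + d g' q" using gate_formula[OF x(1) qQ gq] .
        have e3: "d g' y \<le> d g' q + d q y" using em_tri[OF emQ g'Q qQ y(1)] .
        have e4: "d g' y = d g' c + d c y" using gateD(3)[OF gc] g'P g'Q by blast
        have e5: "d x c \<le> d x g' + d g' c" using em_tri[OF emP x(1) g'P cP] .
        have fxg: "d x g' < \<infinity>" and fgq: "d g' q < \<infinity>" using fxq e2 by auto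
        have A1: "d x g' + d g' y \<le> d x g' + (d g' q + d q y)" using e3 by (rule add_left_mono)
        have B1: "d x g' + (d g' q + d q y) = d x y" using bq e2 by (simp add: add.assoc)
        have "d x y = d x c + d c y" using dxy .
        also have "\<dots> \<le> d x g' + d g' c + d c y" using e5 by (rule add_right_mono)
        also have "\<dots> = d x g' + d g' y" using e4 by (simp add: add.assoc)
        finally have C1: "d x y \<le> d x g' + d g' y" .
        have "d x g' + (d g' q + d q y) = d x g' + d g' y" using A1 B1 C1 by simp
        then have e6: "d g' q + d q y = d g' y" using enn_cancel_left fxg by blast
        have "d g' q + d q y < \<infinity>" using fgq fqy by simp
        then have fgy: "d g' y < \<infinity>" using e6 by simp
        have b1: "btw d g' q y" using e6 fgy by (simp add: btw_def)
        have b2: "btw d g' c y" using e4 fgy by (simp add: btw_def)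
        show ?thesis
        proof (cases "d g' q \<le> d g' c")
          case True
          have "btw d g' q c" using seg_order(1)[OF RQ g'Q y(1) cQ qQ b2 b1 True] .
          then have "q \<in> P \<inter> Q" using cvQ g'P g'Q cP cQ qQ unfolding convexS_def by blast
          then show ?thesis using False by blast
        next
          case False
          then have "d g' c \<le> d g' q" by simp
          then have "btw d c q y" using seg_order(2)[OF RQ g'Q y(1) cQ qQ b2 b1] by blast
          then show ?thesis using part2 qQ Aeq by blast
        qed
      qed
    qed
  qed
qed

end

lemma (in glue) T2_D: "T2 D d"
  unfolding T2_def
proof (intro ballI allI impI)
  interpret S: glue D d Q P by (rule swap)
  have emD: "ext_metric D d" by (rule em_D)
  fix x y A assume x: "x \<in> D" and y: "y \<in> D" and xy: "x \<noteq> y" and A: "is_arc D d x y A"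
  consider "x \<in> P" "y \<in> P" | "x \<in> Q" "y \<in> Q" | "x \<in> P" "x \<notin> Q" "y \<in> Q" "y \<notin> P"
    | "x \<in> Q" "x \<notin> P" "y \<in> P" "y \<notin> Q" using x y DPQ by blast
  then show "A = {q\<in>D. btw d x q y}"
  proof cases
    case 1 then show ?thesis using T2_PP[OF _ _ xy A] by blast
  next
    case 2 then show ?thesis using S.T2_PP[OF _ _ xy A] by blast
  next
    case 3 then show ?thesis using T2_PQ[OF _ _ _ _ A] by blast
  next
    case 4
    have "A = {q\<in>D. btw d y q x}" using T2_PQ[OF 4(3) 4(4) 4(1) 4(2) arc_rev[OF A]] .
    also have "\<dots> = {q\<in>D. btw d x q y}" using btw_sym[OF emD y _ x] btw_sym[OF emD x _ y] by blast
    finally show ?thesis .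
  qed
qed

lemma (in glue) complete_D: "ext_complete D d"
  unfolding ext_complete_def
proof (intro allI impI)
  fix s assume h: "(\<forall>n. s n \<in> D) \<and> ext_cauchy d s"
  have sD: "\<And>n. s n \<in> D" using h by blast
  have cau: "\<And>e::real. e > 0 \<Longrightarrow> \<exists>N. \<forall>m\<ge>N. \<forall>n\<ge>N. d (s m) (s n) < ennreal e"
    using h unfolding ext_cauchy_def by blast
  have emD: "ext_metric D d" by (rule em_D)
  show "ext_converges_in D d s"
  proof (cases "\<exists>N. \<forall>n\<ge>N. s n \<in> Q")
    case True
    then obtain N where N: "\<And>n. n \<ge> N \<Longrightarrow> s n \<in> Q" by blast
    have "ext_cauchy d (\<lambda>n. s (n + N))"
      unfolding ext_cauchy_def
    proof (intro allI impI)
      fix e :: real assume "e > 0"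
      then obtain M where M: "\<forall>m\<ge>M. \<forall>n\<ge>M. d (s m) (s n) < ennreal e" using cau by blast
      show "\<exists>M. \<forall>m\<ge>M. \<forall>n\<ge>M. d (s (m + N)) (s (n + N)) < ennreal e"
        using M by (intro exI[of _ M]) auto
    qed
    moreover have "\<forall>n. s (n + N) \<in> Q" using N by simp
    ultimately have "ext_converges_in Q d (\<lambda>n. s (n + N))"
      using RQ[unfolded RF_def, THEN conjunct2, THEN conjunct1, unfolded ext_complete_def, rule_format, of "\<lambda>n. s (n + N)"] by blast
    then obtain z where z: "z \<in> Q" "\<forall>e::real. e > 0 \<longrightarrow> (\<exists>M. \<forall>n\<ge>M. d (s (n + N)) z < ennreal e)"
      unfolding ext_converges_in_def by blast
    show ?thesis
      unfolding ext_converges_in_def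
    proof (rule bexI[of _ z], intro allI impI)
      show "z \<in> D" using z(1) QD by blast
      fix e :: real assume "e > 0"
      then obtain M where M: "\<forall>n\<ge>M. d (s (n + N)) z < ennreal e" using z(2) by blast
      have "\<forall>n\<ge>M + N. d (s n) z < ennreal e"
      proof (intro allI impI)
        fix n assume "n \<ge> M + N"
        then have "n - N \<ge> M" "n - N + N = n" by auto
        then show "d (s n) z < ennreal e" using M by metis
      qed
      then show "\<exists>N. \<forall>n\<ge>N. d (s n) z < ennreal e" by blast
    qed
  next
    case False
    have infP: "\<And>N. \<exists>n\<ge>N. s n \<in> P"
    proof -
      fix N
      obtain n where "n \<ge> N" "s n \<notin> Q" using False by blast
      then show "\<exists>n\<ge>N. s n \<in> P" using sD DPQ by blast
    qed
    obtain N0 where N0: "\<forall>m\<ge>N0. \<forall>n\<ge>N0. d (s m) (s n) < ennreal 1" using cau[of 1] by auto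
    define t where "t n = (if s (n + N0) \<in> P then s (n + N0) else (SOME p. gate d (P \<inter> Q) (s (n + N0)) p))" for n
    have tprop: "t n \<in> P \<and> (\<forall>k. s k \<in> P \<longrightarrow> d (s (n + N0)) (t n) \<le> d (s k) (s (n + N0)))" for n
    proof (cases "s (n + N0) \<in> P")
      case True
      then have "t n = s (n + N0)" by (simp add: t_def)
      then show ?thesis using True em_zero[OF emD sD] by simp
    next
      case False
      then have sQ: "s (n + N0) \<in> Q" using sD DPQ by blast
      obtain k0 where k0: "k0 \<ge> N0" "s k0 \<in> P" using infP by blast
      have h1: "d (s k0) (s (n + N0)) < ennreal 1" using N0 k0(1) by simp
      have "d (s k0) (s (n + N0)) < \<infinity>" using order.strict_trans[OF h1 ennreal_less_top] by simp
      then have "\<exists>p. gate d (P \<inter> Q) (s (n + N0)) p" using gate_ex[OF k0(2) sQ] by blast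
      then have gt: "gate d (P \<inter> Q) (s (n + N0)) (t n)" using False by (simp add: t_def someI_ex)
      have tP: "t n \<in> P" using gateD(1)[OF gt] .
      have "d (s (n + N0)) (t n) \<le> d (s k) (s (n + N0))" if "s k \<in> P" for k
      proof -
        have "d (s (n + N0)) (t n) = d (t n) (s (n + N0))" using symD sD tP PD by blast
        also have "\<dots> \<le> d (s k) (s (n + N0))" using gate_le[OF that sQ gt] .
        finally show ?thesis .
      qed
      then show ?thesis using tP by blast
    qed
    have tP: "\<And>n. t n \<in> P" using tprop by blast
    have tle: "\<And>n k. s k \<in> P \<Longrightarrow> d (s (n + N0)) (t n) \<le> d (s k) (s (n + N0))" using tprop by blast
    have "ext_cauchy d t"
      unfolding ext_cauchy_def
    proof (intro allI impI)
      fix e :: real assume e: "e > 0"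
      then obtain N1 where N1: "\<forall>m\<ge>N1. \<forall>n\<ge>N1. d (s m) (s n) < ennreal (e/3)" using cau[of "e/3"] by auto
      obtain k where k: "k \<ge> N1" "s k \<in> P" using infP by blast
      have "d (t m) (t n) < ennreal e" if "m \<ge> N1" "n \<ge> N1" for m n
      proof -
        have b1: "d (t m) (s (m + N0)) < ennreal (e/3)"
        proof -
          have "d (t m) (s (m + N0)) = d (s (m + N0)) (t m)" using symD sD tP PD by blast
          also have "\<dots> \<le> d (s k) (s (m + N0))" using tle[OF k(2)] .
          also have "\<dots> < ennreal (e/3)" using N1 k(1) that(1) by simp
          finally show ?thesis .
        qed
        have b2: "d (s (m + N0)) (s (n + N0)) < ennreal (e/3)" using N1 that by simp
        have b3: "d (s (n + N0)) (t n) < ennreal (e/3)"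
          using le_less_trans[OF tle[OF k(2)]] N1 k(1) that(2) by simp
        have "d (t m) (t n) \<le> d (t m) (s (m + N0)) + d (s (m + N0)) (t n)"
          using em_tri[OF emD _ sD _] tP PD by blast
        also have "\<dots> \<le> d (t m) (s (m + N0)) + (d (s (m + N0)) (s (n + N0)) + d (s (n + N0)) (t n))"
          using em_tri[OF emD sD sD] tP PD by (intro add_left_mono) blast
        also have "\<dots> < ennreal (e/3 + (e/3 + e/3))"
          using enn_add_lt[OF b1 enn_add_lt[OF b2 b3]] e by simp
        finally show ?thesis by simp
      qed
      then show "\<exists>N. \<forall>m\<ge>N. \<forall>n\<ge>N. d (t m) (t n) < ennreal e" by blast
    qed
    then have "ext_converges_in P d t"
      using RP[unfolded RF_def, THEN conjunct2, THEN conjunct1, unfolded ext_complete_def, rule_format, of t] tP by blast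
    then obtain z where z: "z \<in> P" "\<forall>e::real. e > 0 \<longrightarrow> (\<exists>M. \<forall>n\<ge>M. d (t n) z < ennreal e)"
      unfolding ext_converges_in_def by blast
    show ?thesis
      unfolding ext_converges_in_def
    proof (rule bexI[of _ z], intro allI impI)
      show "z \<in> D" using z(1) PD by blast
      fix e :: real assume e: "e > 0"
      then obtain M where M: "\<forall>n\<ge>M. d (t n) z < ennreal (e/2)" using z(2) by (meson half_gt_zero)
      obtain N3 where N3: "\<forall>m\<ge>N3. \<forall>n\<ge>N3. d (s m) (s n) < ennreal (e/2)" using cau[of "e/2"] e by auto
      obtain k where k: "k \<ge> N3" "s k \<in> P" using infP by blast
      have "d (s n) z < ennreal e" if n: "n \<ge> M + N0 + N3" for n
      proof -
        define m where "m = n - N0"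
        have mn: "m + N0 = n" "m \<ge> M" using n by (auto simp: m_def)
        have "d (s n) z \<le> d (s n) (t m) + d (t m) z" using em_tri[OF emD sD _ _] tP z(1) PD by blast
        also have "\<dots> < ennreal (e/2 + e/2)"
        proof (rule enn_add_lt)
          have "d (s n) (t m) \<le> d (s k) (s n)" using tle[OF k(2), of m] mn by simp
          also have "\<dots> < ennreal (e/2)" using N3 k(1) n by simp
          finally show "d (s n) (t m) < ennreal (e/2)" .
          show "d (t m) z < ennreal (e/2)" using M mn by simp
        qed (use e in auto)
        finally show ?thesis by simp
      qed
      then show "\<exists>N. \<forall>n\<ge>N. d (s n) z < ennreal e" by blast
    qed
  qed
qed

lemma (in glue) RF_D: "RF D d"
  unfolding RF_def using em_D complete_D T1_D T2_D by blast

definition glue_d :: "('b \<Rightarrow> 'b \<Rightarrow> ennreal) \<Rightarrow> ('c \<Rightarrow> 'c \<Rightarrow> ennreal) \<Rightarrow> 'c set \<Rightarrow> ('c \<Rightarrow> 'b) \<Rightarrow> ('b + 'c) \<Rightarrow> ('b + 'c) \<Rightarrow> ennreal" where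
  "glue_d dB dC S \<sigma> u v = (case u of
      Inl b \<Rightarrow> (case v of Inl b' \<Rightarrow> dB b b' | Inr c \<Rightarrow> (INF s\<in>S. dB b (\<sigma> s) + dC s c))
    | Inr c \<Rightarrow> (case v of Inl b \<Rightarrow> (INF s\<in>S. dB b (\<sigma> s) + dC s c) | Inr c' \<Rightarrow> dC c c'))"

lemma glue_d_simps[simp]:
  "glue_d dB dC S \<sigma> (Inl b) (Inl b') = dB b b'"
  "glue_d dB dC S \<sigma> (Inr c) (Inr c') = dC c c'"
  "glue_d dB dC S \<sigma> (Inl b) (Inr c) = (INF s\<in>S. dB b (\<sigma> s) + dC s c)"
  "glue_d dB dC S \<sigma> (Inr c) (Inl b) = (INF s\<in>S. dB b (\<sigma> s) + dC s c)"
  by (simp_all add: glue_d_def)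

lemma INF_attained:
  fixes F :: "'s \<Rightarrow> ennreal"
  assumes "s0 \<in> S" "\<And>s. s \<in> S \<Longrightarrow> F s0 \<le> F s"
  shows "(INF s\<in>S. F s) = F s0"
proof (rule antisym)
  show "(INF s\<in>S. F s) \<le> F s0" using assms(1) by (rule INF_lower)
  show "F s0 \<le> (INF s\<in>S. F s)" using assms(2) by (rule INF_greatest)
qed

lemma amalgam:
  fixes A :: "'x set" and B :: "'b set" and C :: "'c set"
  assumes RA: "R_forest A dA" and RB: "R_forest B dB" and RC: "R_forest C dC"
    and ef: "iso_emb A dA B dB f" and eg: "iso_emb A dA C dC g"
  shows "\<exists>(D::('b + 'c) set) dD h k. R_forest D dD \<and> iso_emb B dB D dD h \<and> iso_emb C dC D dD k \<and> (\<forall>a\<in>A. h (f a) = k (g a))"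
proof -
  have FA: "RF A dA" and FB: "RF B dB" and FC: "RF C dC" using RA RB RC by (simp_all add: R_forest_RF)
  have emA: "ext_metric A dA" and emB: "ext_metric B dB" and emC: "ext_metric C dC" using FA FB FC by (simp_all add: RF_em)
  have injg: "inj_on g A" using iso_emb_inj[OF eg emA] .
  define SA where "SA = g ` A"
  define \<sigma> where "\<sigma> c = f (inv_into A g c)" for c
  have \<sigma>g: "\<And>a. a \<in> A \<Longrightarrow> \<sigma> (g a) = f a" using inv_into_f_f[OF injg] by (simp add: \<sigma>_def)
  have SAC: "SA \<subseteq> C" using iso_embD(1)[OF eg] by (auto simp: SA_def)
  have \<sigma>B: "\<And>c. c \<in> SA \<Longrightarrow> \<sigma> c \<in> B" using \<sigma>g iso_embD(1)[OF ef] by (auto simp: SA_def)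
  have \<sigma>iso: "\<And>c c'. c \<in> SA \<Longrightarrow> c' \<in> SA \<Longrightarrow> dB (\<sigma> c) (\<sigma> c') = dC c c'"
    using \<sigma>g iso_embD(2)[OF ef] iso_embD(2)[OF eg] by (auto simp: SA_def)
  define dD where "dD = glue_d dB dC SA \<sigma>"
  define D where "D = Inl ` B \<union> Inr ` (C - SA)"
  define k where "k c = (if c \<in> SA then Inl (\<sigma> c) else Inr c)" for c :: 'c
  define P where "P = (Inl ` B :: ('b + 'c) set)"
  define Q where "Q = k ` C"
  have Inl_eq: "dD (Inl b) (Inl b') = dB b b'" for b b' by (simp add: dD_def)
  have kiso: "dD (k c) (k c') = dC c c'" if c: "c \<in> C" and c': "c' \<in> C" for c c'
  proof -
    consider "c \<in> SA" "c' \<in> SA" | "c \<in> SA" "c' \<notin> SA" | "c \<notin> SA" "c' \<in> SA" | "c \<notin> SA" "c' \<notin> SA" by blast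
    then show ?thesis
    proof cases
      case 1 then show ?thesis using \<sigma>iso by (simp add: k_def dD_def)
    next
      case 2
      have "(INF s\<in>SA. dB (\<sigma> c) (\<sigma> s) + dC s c') = (INF s\<in>SA. dC c s + dC s c')"
        using \<sigma>iso 2(1) by (intro INF_cong) auto
      also have "\<dots> = dC c c' + dC c' c'"
      proof -
        have "(INF s\<in>SA. dC c s + dC s c') = dC c c + dC c c'"
          using 2(1) em_tri[OF emC c _ c'] SAC em_zero[OF emC c] by (intro INF_attained) auto
        then show ?thesis using em_zero[OF emC c] em_zero[OF emC c'] by simp
      qed
      finally show ?thesis using 2 em_zero[OF emC c'] by (simp add: k_def dD_def)
    next
      case 3
      have "(INF s\<in>SA. dB (\<sigma> c') (\<sigma> s) + dC s c) = (INF s\<in>SA. dC c' s + dC s c)"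
        using \<sigma>iso 3(2) by (intro INF_cong) auto
      also have "\<dots> = dC c' c' + dC c' c"
        using 3(2) em_tri[OF emC c' _ c] SAC em_zero[OF emC c'] by (intro INF_attained) auto
      also have "\<dots> = dC c c'" using em_zero[OF emC c'] em_sym[OF emC c c'] by simp
      finally show ?thesis using 3 by (simp add: k_def dD_def)
    next
      case 4 then show ?thesis by (simp add: k_def dD_def)
    qed
  qed
  have kSA: "\<And>a. a \<in> A \<Longrightarrow> k (g a) = Inl (f a)" using \<sigma>g by (simp add: k_def SA_def)
  have eB: "iso_emb B dB D dD Inl" unfolding iso_emb_def D_def using Inl_eq by blast
  have kD: "\<And>c. c \<in> C \<Longrightarrow> k c \<in> D" using \<sigma>B by (auto simp: k_def D_def)
  have eC: "iso_emb C dC D dD k" unfolding iso_emb_def using kD kiso by blast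
  have eP: "iso_emb B dB P dD Inl" unfolding iso_emb_def P_def using Inl_eq by blast
  have eQ: "iso_emb C dC Q dD k" unfolding iso_emb_def Q_def using kiso by blast
  have FP: "RF P dD" using RF_transfer[OF FB eP] by (simp add: P_def)
  have FQ: "RF Q dD" using RF_transfer[OF FC eQ] by (simp add: Q_def)
  have kSA': "k ` SA = Inl ` (f ` A)" using kSA by (force simp: SA_def)
  have PQ: "P \<inter> Q = Inl ` (f ` A)"
  proof
    have "Inl ` (f ` A) \<subseteq> Q" unfolding kSA'[symmetric] Q_def using SAC by (rule image_mono)
    moreover have "Inl ` (f ` A) \<subseteq> P" using iso_embD(1)[OF ef] by (auto simp: P_def)
    ultimately show "Inl ` (f ` A) \<subseteq> P \<inter> Q" by blast
    show "P \<inter> Q \<subseteq> Inl ` (f ` A)"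
    proof
      fix u assume "u \<in> P \<inter> Q"
      then have "u \<in> Inl ` B" "u \<in> k ` C" by (simp_all add: P_def Q_def)
      then obtain b c where "u = Inl b" "c \<in> C" "u = k c" by blast
      then have "c \<in> SA" by (auto simp: k_def split: if_splits)
      then show "u \<in> Inl ` (f ` A)" using kSA' \<open>u = k c\<close> by blast
    qed
  qed
  have DPQ: "D = P \<union> Q"
  proof
    show "D \<subseteq> P \<union> Q"
    proof
      fix u assume "u \<in> D"
      then consider b where "b \<in> B" "u = Inl b" | c where "c \<in> C" "c \<notin> SA" "u = Inr c" by (auto simp: D_def)
      then show "u \<in> P \<union> Q"
      proof cases
        case 1 then show ?thesis by (simp add: P_def)
      next
        case 2 then have "u = k c" by (simp add: k_def)
        then show ?thesis using 2 by (simp add: Q_def)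
      qed
    qed
    show "P \<union> Q \<subseteq> D" using kD by (auto simp: P_def Q_def D_def)
  qed
  have eAP: "iso_emb A dA P dD (Inl \<circ> f)"
    unfolding iso_emb_def P_def using iso_embD[OF ef] Inl_eq by auto
  have eAQ: "iso_emb A dA Q dD (k \<circ> g)"
    unfolding iso_emb_def Q_def using iso_embD[OF eg] kiso by auto
  have imP: "(Inl \<circ> f) ` A = P \<inter> Q" using PQ by (simp add: image_comp)
  have imQ: "(k \<circ> g) ` A = P \<inter> Q" using PQ kSA by (force simp: image_comp)
  have clP: "closedS P dD (P \<inter> Q)" using emb_closed[OF FA RF_em[OF FP] eAP] imP by simp
  have clQ: "closedS Q dD (P \<inter> Q)" using emb_closed[OF FA RF_em[OF FQ] eAQ] imQ by simp
  have cvP: "convexS P dD (P \<inter> Q)" using emb_convex[OF FA FP eAP] imP by simp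
  have cvQ: "convexS Q dD (P \<inter> Q)" using emb_convex[OF FA FQ eAQ] imQ by simp
  have symD: "dD u v = dD v u" if uD: "u \<in> D" and vD: "v \<in> D" for u v
  proof -
    consider b b' where "b \<in> B" "b' \<in> B" "u = Inl b" "v = Inl b'" | b c where "u = Inl b" "v = Inr c"
      | b c where "u = Inr c" "v = Inl b" | c c' where "c \<in> C" "c' \<in> C" "u = Inr c" "v = Inr c'"
      using uD vD unfolding D_def by blast
    then show ?thesis
    proof cases
      case 1 then show ?thesis using em_sym[OF emB] by (simp add: dD_def)
    next
      case 2 then show ?thesis by (simp add: dD_def)
    next
      case 3 then show ?thesis by (simp add: dD_def)
    next
      case 4 then show ?thesis using em_sym[OF emC] by (simp add: dD_def)
    qed
  qed
  have infD: "dD x y = (INF s\<in>P \<inter> Q. dD x s + dD s y)" if x: "x \<in> P" and y: "y \<in> Q" for x y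
  proof -
    obtain b where b: "b \<in> B" "x = Inl b" using x by (auto simp: P_def)
    obtain c where c: "c \<in> C" "y = k c" using y by (auto simp: Q_def)
    have "P \<inter> Q = k ` SA" using PQ kSA' by simp
    then have "(INF s\<in>P \<inter> Q. dD x s + dD s y) = (INF s\<in>SA. dD x (k s) + dD (k s) y)" by (simp add: image_comp)
    also have "\<dots> = (INF s\<in>SA. dB b (\<sigma> s) + dC s c)"
    proof (rule INF_cong)
      fix s assume s: "s \<in> SA"
      have "dD x (k s) = dB b (\<sigma> s)" using s b by (simp add: k_def dD_def)
      moreover have "dD (k s) y = dC s c" using kiso[of s c] s SAC c by auto
      ultimately show "dD x (k s) + dD (k s) y = dB b (\<sigma> s) + dC s c" by simp
    qed simp
    also have "\<dots> = dD x y"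
    proof (cases "c \<in> SA")
      case False then show ?thesis using b c by (simp add: k_def dD_def)
    next
      case True
      have "(INF s\<in>SA. dB b (\<sigma> s) + dC s c) = dB b (\<sigma> c) + dC c c"
      proof (rule INF_attained[OF True])
        fix s assume s: "s \<in> SA"
        have "dB b (\<sigma> c) \<le> dB b (\<sigma> s) + dB (\<sigma> s) (\<sigma> c)" using em_tri[OF emB b(1) \<sigma>B[OF s] \<sigma>B[OF True]] .
        then show "dB b (\<sigma> c) + dC c c \<le> dB b (\<sigma> s) + dC s c" using \<sigma>iso[OF s True] em_zero[OF emC c(1)] by simp
      qed
      then show ?thesis using b c True em_zero[OF emC c(1)] by (simp add: k_def dD_def)
    qed
    finally show ?thesis by simp
  qed
  have gl: "glue D dD P Q"
    by (unfold_locales) (fact DPQ FP FQ clP clQ cvP cvQ | rule symD infD; assumption)+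
  have "RF D dD" using glue.RF_D[OF gl] .
  then have "R_forest D dD" by (rule RF_R_forest)
  moreover have "\<forall>a\<in>A. Inl (f a) = k (g a)" using kSA by simp
  ultimately show ?thesis using eB eC by blast
qed

lemma R_forest_empty: "R_forest ({}::unit set) d"
  unfolding R_forest_def ext_metric_def ext_complete_def by auto

lemma iso_emb_empty: "iso_emb ({}::unit set) d X dX f"
  unfolding iso_emb_def by auto

theorem proposition2p7:
  shows
  "(\<forall>(X::'a set) dX (Y::'b set) dY.
      R_forest X dX \<and> R_forest Y dY \<longrightarrow>
      (\<exists>(Z::('a + 'b) set) dZ f g.
         R_forest Z dZ \<and> iso_emb X dX Z dZ f \<and> iso_emb Y dY Z dZ g)) \<and>
   (\<forall>(A::'a set) dA (B::'b set) dB (C::'c set) dC f g.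
      R_forest A dA \<and> R_forest B dB \<and> R_forest C dC \<and>
      iso_emb A dA B dB f \<and> iso_emb A dA C dC g \<longrightarrow>
      (\<exists>(D::('b + 'c) set) dD h k.
         R_forest D dD \<and> iso_emb B dB D dD h \<and> iso_emb C dC D dD k \<and>
         (\<forall>a\<in>A. h (f a) = k (g a))))"
proof (intro conjI allI impI)
  fix X :: "'a set" and dX and Y :: "'b set" and dY
  assume h: "R_forest X dX \<and> R_forest Y dY"
  have "\<exists>(D::('a + 'b) set) dD h k. R_forest D dD \<and> iso_emb X dX D dD h \<and> iso_emb Y dY D dD k \<and>
      (\<forall>a\<in>({}::unit set). h ((\<lambda>_. undefined) a) = k ((\<lambda>_. undefined) a))"
    using amalgam[OF R_forest_empty[of "\<lambda>_ _. 0"] _ _ iso_emb_empty iso_emb_empty] h by blast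
  then show "\<exists>(Z::('a + 'b) set) dZ f g. R_forest Z dZ \<and> iso_emb X dX Z dZ f \<and> iso_emb Y dY Z dZ g" by blast
next
  fix A :: "'a set" and dA and B :: "'b set" and dB and C :: "'c set" and dC and f g
  assume "R_forest A dA \<and> R_forest B dB \<and> R_forest C dC \<and> iso_emb A dA B dB f \<and> iso_emb A dA C dC g"
  then show "\<exists>(D::('b + 'c) set) dD h k. R_forest D dD \<and> iso_emb B dB D dD h \<and> iso_emb C dC D dD k \<and>
         (\<forall>a\<in>A. h (f a) = k (g a))"
    using amalgam by blast
qed


end
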